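(* Let $X$ and $Y$ be mm-spaces. Then \[ \square(X,Y)=\min_{\pi,S}\max\{1-\pi(S),\ \operatorname{dis} S\}, \] where $\pi$ runs over all transport plans $\pi\in\Pi(m_X,m_Y)$ and $S$ runs over all closed subsets of $X\times Y$; in particular the minimum is attained by some pair $(\pi,S)$.
   Context: An mm-space is a triple $(X,d_X,m_X)$ where $(X,d_X)$ is a complete separable metric space and $m_X$ is a Borel probability measure on $X$. For Borel probability measures $\mu,\nu$ on $X,Y$, $\Pi(\mu,\nu)$ denotes the set of Borel probability measures $\pi$ on $X\times Y$ with $(\mathrm{pr}_1)_*\pi=\mu$ and $(\mathrm{pr}_2)_*\pi=\nu$ (transport plans). For a nonempty $S\subset X\times Y$, $\operatorname{dis}S:=\sup\{|d_X(x,x')-d_Y(y,y')| : (x,y),(x',y')\in S\}$, and $\operatorname{dis}\emptyset:=\infty$. Let $I=[0,1)$ with Lebesgue measure $\mathcal L^1$. A parameter of $X$ is a Borel map $\varphi:I\to X$ with $\varphi_*\mathcal L^1=m_X$. For pseudo-metrics $\rho_1,\rho_2$ on $I$, $\square(\rho_1,\rho_2)$ is the infimum of $\varepsilon\ge0$ such that there is a Borel $I_0\subset I$ with $\mathcal L^1(I_0)\ge1-\varepsilon$ and $|\rho_1(s,t)-\rho_2(s,t)|\le\varepsilon$ for all $s,t\in I_0$. The box distance is $\square(X,Y):=\inf_{\varphi,\psi}\square(\varphi^*d_X,\psi^*d_Y)$ over parameters $\varphi$ of $X$ and $\psi$ of $Y$, where $\varphi^*d_X(s,t):=d_X(\varphi(s),\varphi(t))$.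 *)

theory Defs
  imports "HOL-Analysis.Analysis" "HOL-Probability.Probability"
begin

definition unitI :: "real measure" where
  "unitI = restrict_space lborel {0..<1}"

text \<open>mm-space: a complete separable metric space (type of class polish_space)
  with a Borel probability measure.\<close>
definition mm_measure :: "'a::topological_space measure \<Rightarrow> bool" where
  "mm_measure m \<longleftrightarrow> prob_space m \<and> sets m = sets borel"

definition transport_plans ::
  "'a::topological_space measure \<Rightarrow> 'b::topological_space measure \<Rightarrow> ('a \<times> 'b) measure set" where
  "transport_plans \<mu> \<nu> = {\<pi>. prob_space \<pi> \<and> sets \<pi> = sets borel \<and>
      distr \<pi> borel fst = \<mu> \<and> distr \<pi> borel snd = \<nu>}"

definition dis :: "('a::metric_space \<times> 'b::metric_space) set \<Rightarrow> ereal" where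
  "dis S = (if S = {} then \<infinity> else
     (SUP p \<in> S \<times> S. ereal \<bar>dist (fst (fst p)) (fst (snd p)) - dist (snd (fst p)) (snd (snd p))\<bar>))"

definition parameter :: "'a::topological_space measure \<Rightarrow> (real \<Rightarrow> 'a) \<Rightarrow> bool" where
  "parameter m \<phi> \<longleftrightarrow> \<phi> \<in> borel_measurable unitI \<and> distr unitI borel \<phi> = m"

definition box_pm :: "(real \<Rightarrow> real \<Rightarrow> real) \<Rightarrow> (real \<Rightarrow> real \<Rightarrow> real) \<Rightarrow> real" where
  "box_pm \<rho>1 \<rho>2 = Inf {\<epsilon>. \<epsilon> \<ge> 0 \<and> (\<exists>I0. I0 \<in> sets borel \<and> I0 \<subseteq> {0..<1} \<and>
      measure lborel I0 \<ge> 1 - \<epsilon> \<and>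
      (\<forall>s\<in>I0. \<forall>t\<in>I0. \<bar>\<rho>1 s t - \<rho>2 s t\<bar> \<le> \<epsilon>))}"

definition box_dist :: "'a::metric_space measure \<Rightarrow> 'b::metric_space measure \<Rightarrow> real" where
  "box_dist mX mY = Inf {box_pm (\<lambda>s t. dist (\<phi> s) (\<phi> t)) (\<lambda>s t. dist (\<psi> s) (\<psi> t)) |\<phi> \<psi>.
      parameter mX \<phi> \<and> parameter mY \<psi>}"

end

theory Submission
  imports Defs "HOL-Library.Diagonal_Subsequence"
begin

lemma diag_convergent:
  fixes f :: "nat \<Rightarrow> nat \<Rightarrow> real"
  assumes f: "\<And>i n. \<bar>f i n\<bar> \<le> 1"
  shows "\<exists>r. strict_mono r \<and> (\<forall>i. convergent (\<lambda>j. f i (r j)))"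
proof -
  interpret subseqs "\<lambda>i s. convergent (\<lambda>j. f i (s j))"
  proof
    fix i and s :: "nat \<Rightarrow> nat" assume "strict_mono s"
    have "bounded (range (\<lambda>j. f i (s j)))"
      using f by (auto simp: bounded_iff intro!: exI[of _ 1])
    then obtain l r where "strict_mono r" "((\<lambda>j. f i (s j)) \<circ> r) \<longlonglongrightarrow> l"
      using bounded_imp_convergent_subsequence by blast
    then show "\<exists>r'. strict_mono r' \<and> convergent (\<lambda>j. f i ((s \<circ> r') j))"
      by (auto simp: convergent_def o_def)
  qed
  have "convergent (\<lambda>j. f i (diagseq j))" for i
  proof -
    have "convergent (\<lambda>j. f i ((diagseq \<circ> (+) (Suc i)) j))"
      by (rule diagseq_holds) (auto simp: convergent_def o_def intro: LIMSEQ_subseq_LIMSEQ[unfolded o_def])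
    then have "convergent (\<lambda>j. f i (diagseq (j + Suc i)))" by (simp add: o_def add.commute)
    then show ?thesis using convergent_ignore_initial_segment[of "\<lambda>j. f i (diagseq j)" "Suc i"] by simp
  qed
  then show ?thesis using subseq_diagseq by blast
qed


definition dseq :: "nat \<Rightarrow> 'z::metric_space" where
  "dseq = (SOME d. \<forall>z. \<forall>e>0. \<exists>i. dist z (d i) < e)"

lemma dseq_ex: "\<exists>d::nat \<Rightarrow> 'z::{metric_space,second_countable_topology}. \<forall>z. \<forall>e>0. \<exists>i. dist z (d i) < e"
proof -
  obtain X :: "'z set" where X: "countable X" "\<And>Y. open Y \<Longrightarrow> Y \<noteq> {} \<Longrightarrow> \<exists>d\<in>X. d \<in> Y"
    using countable_dense_setE by blast
  have "X \<noteq> {}" using X(2)[of UNIV] by auto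
  then have r: "range (from_nat_into X) = X" using X(1) by (simp add: range_from_nat_into)
  have "\<forall>z. \<forall>e>0. \<exists>i. dist z (from_nat_into X i) < e"
  proof (intro allI impI)
    fix z :: 'z and e :: real assume "e > 0"
    then obtain d where "d \<in> X" "d \<in> ball z e" using X(2)[of "ball z e"] by auto
    then show "\<exists>i. dist z (from_nat_into X i) < e" using r by (metis imageE mem_ball)
  qed
  then show ?thesis by blast
qed

lemma dseq: "e > 0 \<Longrightarrow> \<exists>i. dist z (dseq i :: 'z::{metric_space,second_countable_topology}) < e"
  unfolding dseq_def using someI_ex[OF dseq_ex] by blast

definition idx :: "nat \<Rightarrow> 'z::metric_space \<Rightarrow> nat" where
  "idx l z = (LEAST i. dist z (dseq i) < (1/2)^l)"

lemma idx: "dist z (dseq (idx l z)) < (1/2::real)^l" for z :: "'z::{metric_space,second_countable_topology}"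
  unfolding idx_def by (rule LeastI_ex) (rule dseq, simp)

lemma idx_le: "dist z (dseq i) < (1/2::real)^l \<Longrightarrow> idx l z \<le> i"
  unfolding idx_def by (rule Least_le)

definition code :: "'z::metric_space \<Rightarrow> nat \<Rightarrow> nat list" where
  "code z k = map (\<lambda>l. idx l z) [0..<k]"

definition cell :: "nat list \<Rightarrow> 'z::metric_space set" where
  "cell ks = {z. code z (length ks) = ks}"

lemma length_code[simp]: "length (code z k) = k" by (simp add: code_def)

lemma take_code: "k \<le> m \<Longrightarrow> take k (code z m) = code z k"
  by (simp add: code_def take_map)

lemma code_Suc: "code z (Suc k) = code z k @ [idx k z]" by (simp add: code_def)

lemma nth_code: "l < k \<Longrightarrow> code z k ! l = idx l z" by (simp add: code_def)

lemma code_eq_iff: "code z k = ks \<longleftrightarrow> length ks = k \<and> (\<forall>l<k. idx l z = ks ! l)"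
  by (auto simp: nth_code intro!: nth_equalityI)

lemma cell_Nil[simp]: "cell [] = UNIV" by (simp add: cell_def code_def)

lemma cell_snoc: "cell (ks @ [i]) = cell ks \<inter> {z. idx (length ks) z = i}"
  by (auto simp: cell_def code_Suc)

lemma in_cell: "z \<in> cell (code z k)" by (simp add: cell_def)

lemma in_cell_iff: "z \<in> cell ks \<longleftrightarrow> code z (length ks) = ks" by (simp add: cell_def)

lemma cell_disj: "length ks = length ks' \<Longrightarrow> ks \<noteq> ks' \<Longrightarrow> cell ks \<inter> cell ks' = {}"
  by (auto simp: cell_def)

lemma cell_take: "k \<le> length ks \<Longrightarrow> cell ks \<subseteq> cell (take k ks)"
proof
  fix z assume k: "k \<le> length ks" and "z \<in> cell ks"
  then have "code z (length ks) = ks" by (simp add: cell_def)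
  then have "take k ks = code z k" using take_code[OF k, of z] by simp
  then show "z \<in> cell (take k ks)" using k by (simp add: cell_def min_def)
qed

lemma cell_dist:
  fixes z w :: "'z::{metric_space,second_countable_topology}"
  assumes "z \<in> cell ks" "w \<in> cell ks" "l < length ks"
  shows "dist z w < 2 * (1/2)^l"
proof -
  have "idx l z = ks ! l" "idx l w = ks ! l" using assms by (auto simp: cell_def code_eq_iff)
  then have "dist z (dseq (ks!l)) < (1/2)^l" "dist w (dseq (ks!l)) < (1/2)^l" using idx by metis+
  then show ?thesis using dist_triangle3[of z w "dseq (ks!l)"] by (simp add: dist_commute)
qed

lemma idx_set: "{z::'z::{metric_space,second_countable_topology}. idx l z = i} = {z. dist z (dseq i) < (1/2::real)^l} - (\<Union>j<i. {z. dist z (dseq j) < (1/2)^l})"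
proof -
  have "idx l z = i \<longleftrightarrow> dist z (dseq i) < (1/2::real)^l \<and> (\<forall>j<i. \<not> dist z (dseq j) < (1/2)^l)" for z :: 'z
  proof
    assume "idx l z = i"
    then show "dist z (dseq i) < (1/2::real)^l \<and> (\<forall>j<i. \<not> dist z (dseq j) < (1/2)^l)"
      using idx[of z l] idx_le[of z _ l] by (meson leD)
  next
    assume *: "dist z (dseq i) < (1/2::real)^l \<and> (\<forall>j<i. \<not> dist z (dseq j) < (1/2)^l)"
    then have "idx l z \<le> i" using idx_le by blast
    moreover have "\<not> idx l z < i" using * idx[of z l] by blast
    ultimately show "idx l z = i" by simp
  qed
  then show ?thesis by (simp add: set_eq_iff Ball_def)
qed

lemma idx_set_borel: "{z::'z::{metric_space,second_countable_topology}. idx l z = i} \<in> sets borel"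
proof -
  have o: "{z::'z. dist z (dseq j) < (1/2::real)^l} \<in> sets borel" for j
  proof (rule borel_open)
    show "open {z::'z. dist z (dseq j) < (1/2::real)^l}"
      using open_ball[of "dseq j" "(1/2::real)^l"] by (simp add: ball_def dist_commute)
  qed
  have u: "(\<Union>j<i. {z::'z. dist z (dseq j) < (1/2::real)^l}) \<in> sets borel"
    by (rule sets.finite_UN) (simp_all add: o)
  show ?thesis unfolding idx_set by (rule sets.Diff[OF o u])
qed

lemma cell_eq_Inter: "cell ks = (\<Inter>l<length ks. {z. idx l z = ks ! l})"
  by (auto simp: cell_def code_eq_iff)

lemma cell_borel: "cell ks \<in> sets (borel :: 'z::{metric_space,second_countable_topology} measure)"
proof (cases "ks = []")
  case True then show ?thesis using sets.top[of borel] by simp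
next
  case False
  have "(\<Inter>l\<in>{..<length ks}. {z::'z. idx l z = ks ! l}) \<in> sets borel"
    by (rule sets.finite_INT) (use False idx_set_borel in auto)
  then show ?thesis unfolding cell_eq_Inter .
qed

lemma cell_children: "cell ks = (\<Union>i. cell (ks @ [i]))"
  by (auto simp: cell_def code_Suc)

lemma disjoint_children: "disjoint_family (\<lambda>i. cell (ks @ [i]))"
  by (auto simp: disjoint_family_on_def cell_def code_Suc)

lemma compact_idx_bound:
  fixes K :: "'z::{metric_space,second_countable_topology} set"
  assumes "compact K"
  shows "\<exists>N. \<forall>z\<in>K. idx l z < N"
proof -
  have "K \<subseteq> (\<Union>i. ball (dseq i) ((1/2)^l))"
  proof
    fix z assume "z \<in> K"
    show "z \<in> (\<Union>i. ball (dseq i) ((1/2)^l))"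
      using idx[of z l] by (auto simp: dist_commute mem_ball)
  qed
  then obtain D where D: "D \<subseteq> UNIV" "finite D" "K \<subseteq> (\<Union>i\<in>D. ball (dseq i) ((1/2)^l))"
    using compactE_image[OF assms, of UNIV "\<lambda>i. ball (dseq i) ((1/2)^l)"] by auto
  show ?thesis
  proof (intro exI ballI)
    fix z assume "z \<in> K"
    then obtain i where "i \<in> D" "dist z (dseq i) < (1/2)^l" using D(3) by (auto simp: dist_commute)
    then have "idx l z \<le> i" using idx_le by blast
    also have "i < Suc (Max D)" using \<open>i \<in> D\<close> D(2) by (simp add: le_imp_less_Suc)
    finally show "idx l z < Suc (Max D)" .
  qed
qed

definition lo :: "(nat list \<Rightarrow> real) \<Rightarrow> nat list \<Rightarrow> real" where
  "lo p ks = (\<Sum>l<length ks. \<Sum>j<ks!l. p (take l ks @ [j]))"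

definition J :: "(nat list \<Rightarrow> real) \<Rightarrow> nat list \<Rightarrow> real set" where
  "J p ks = {lo p ks ..< lo p ks + p ks}"

lemma lo_Nil[simp]: "lo p [] = 0" by (simp add: lo_def)

lemma lo_snoc: "lo p (ks @ [i]) = lo p ks + (\<Sum>j<i. p (ks @ [j]))"
proof -
  define f where "f l = (\<Sum>j<(ks@[i])!l. p (take l (ks@[i]) @ [j]))" for l
  have "lo p (ks @ [i]) = (\<Sum>l<Suc (length ks). f l)"
    by (simp only: lo_def f_def length_append_singleton)
  also have "\<dots> = (\<Sum>l<length ks. f l) + f (length ks)"
    by (rule sum.lessThan_Suc)
  also have "f (length ks) = (\<Sum>j<i. p (ks @ [j]))"
    by (simp add: f_def)
  also have "(\<Sum>l<length ks. f l) = lo p ks"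
    unfolding lo_def f_def
  proof (rule sum.cong[OF refl])
    fix l assume "l \<in> {..<length ks}"
    then have l: "l < length ks" by simp
    then have "(ks@[i])!l = ks!l" "take l (ks@[i]) = take l ks" by (simp_all add: nth_append)
    then show "(\<Sum>j<(ks@[i])!l. p (take l (ks@[i]) @ [j])) = (\<Sum>j<ks!l. p (take l ks @ [j]))" by simp
  qed
  finally show ?thesis .
qed

locale masses =
  fixes p :: "nat list \<Rightarrow> real"
  assumes p_Nil: "p [] = 1" and p_nonneg: "\<And>ks. p ks \<ge> 0"
    and p_sums: "\<And>ks. (\<lambda>i. p (ks @ [i])) sums p ks"
begin

lemma psum_le: "(\<Sum>j<i. p (ks @ [j])) \<le> p ks"
proof -
  have "(\<Sum>j<i. p (ks @ [j])) \<le> (\<Sum>j. p (ks @ [j]))"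
    by (rule sum_le_suminf[OF sums_summable[OF p_sums[of ks]]]) (simp_all add: p_nonneg)
  also have "\<dots> = p ks" using sums_unique[OF p_sums[of ks]] by simp
  finally show ?thesis .
qed

lemma J_Nil: "J p [] = {0..<1}" by (simp add: J_def p_Nil)

lemma J_snoc_sub: "J p (ks @ [i]) \<subseteq> J p ks"
proof -
  have "(\<Sum>j<i. p (ks @ [j])) + p (ks @ [i]) = (\<Sum>j<Suc i. p (ks @ [j]))" by simp
  also have "\<dots> \<le> p ks" by (rule psum_le)
  finally have a: "(\<Sum>j<i. p (ks @ [j])) + p (ks @ [i]) \<le> p ks" .
  have b: "0 \<le> (\<Sum>j<i. p (ks @ [j]))" by (simp add: sum_nonneg p_nonneg)
  show ?thesis unfolding J_def lo_snoc using a b by auto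
qed

lemma J_snoc_disj:
  assumes "i \<noteq> i'" shows "J p (ks @ [i]) \<inter> J p (ks @ [i']) = {}"
proof -
  have *: "J p (ks @ [i]) \<inter> J p (ks @ [i']) = {}" if "i < i'" for i i'
  proof -
    have "(\<Sum>j<i. p (ks @ [j])) + p (ks @ [i]) = (\<Sum>j<Suc i. p (ks @ [j]))" by simp
    also have "\<dots> \<le> (\<Sum>j<i'. p (ks @ [j]))"
      using that by (intro sum_mono2) (auto simp: p_nonneg)
    finally have le: "lo p (ks @ [i]) + p (ks @ [i]) \<le> lo p (ks @ [i'])" by (simp add: lo_snoc)
    have "{a..<b} \<inter> {c..<d} = {}" if "b \<le> c" for a b c d :: real using that by auto
    from this[OF le] show ?thesis unfolding J_def .
  qed
  show ?thesis
  proof (cases "i < i'")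
    case True then show ?thesis by (rule *)
  next
    case False then have "i' < i" using assms by simp
    then show ?thesis using *[of i' i] by blast
  qed
qed

lemma J_snoc_cover:
  assumes t: "t \<in> J p ks" shows "\<exists>i. t \<in> J p (ks @ [i])"
proof -
  let ?s = "\<lambda>n. \<Sum>j<n. p (ks @ [j])"
  have lim: "?s \<longlonglongrightarrow> p ks" using p_sums[of ks] by (simp add: sums_def)
  have "t - lo p ks < p ks" using t by (auto simp: J_def)
  then have "\<forall>\<^sub>F n in sequentially. t - lo p ks < ?s n"
    by (rule order_tendstoD(1)[OF lim])
  then obtain N where "\<forall>n\<ge>N. t - lo p ks < ?s n" unfolding eventually_sequentially by blast
  then have ex: "t - lo p ks < ?s N" by simp
  define n where "n = (LEAST n. t - lo p ks < ?s n)"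
  have n1: "t - lo p ks < ?s n" unfolding n_def by (rule LeastI_ex) (use ex in blast)
  have n2: "\<not> t - lo p ks < ?s m" if "m < n" for m using that unfolding n_def by (rule not_less_Least)
  note n = n1 n2
  have "n \<noteq> 0"
  proof
    assume "n = 0" then show False using n(1) t by (auto simp: J_def)
  qed
  then obtain i where i: "n = Suc i" by (cases n) auto
  have "?s i \<le> t - lo p ks" using n(2)[of i] i by simp
  then have "t \<in> J p (ks @ [i])" using n(1) i by (simp add: J_def lo_snoc)
  then show ?thesis ..
qed

lemma J_take: "k \<le> length ks \<Longrightarrow> J p ks \<subseteq> J p (take k ks)"
proof (induction ks rule: rev_induct)
  case Nil then show ?case by simp
next
  case (snoc x xs)
  show ?case
  proof (cases "k = Suc (length xs)")
    case True then show ?thesis by simp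
  next
    case False
    then have "k \<le> length xs" using snoc.prems by simp
    then show ?thesis using snoc.IH J_snoc_sub[of xs x] by simp
  qed
qed

lemma J_sub01: "J p ks \<subseteq> {0..<1}"
  using J_take[of 0 ks] J_Nil by simp

lemma J_exists: "t \<in> {0..<1} \<Longrightarrow> \<exists>ks. length ks = k \<and> t \<in> J p ks"
proof (induction k)
  case 0 then show ?case using J_Nil by (intro exI[of _ "[]"]) auto
next
  case (Suc k)
  then obtain ks where "length ks = k" "t \<in> J p ks" by blast
  moreover obtain i where "t \<in> J p (ks @ [i])" using J_snoc_cover \<open>t \<in> J p ks\<close> by blast
  ultimately show ?case by (intro exI[of _ "ks @ [i]"]) auto
qed

lemma J_unique: "length ks = length ks' \<Longrightarrow> t \<in> J p ks \<Longrightarrow> t \<in> J p ks' \<Longrightarrow> ks = ks'"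
proof (induction ks arbitrary: ks' rule: rev_induct)
  case Nil then show ?case by simp
next
  case (snoc x xs)
  then obtain ys y where ks': "ks' = ys @ [y]" by (metis length_Suc_conv_rev length_append_singleton)
  have "t \<in> J p xs" "t \<in> J p ys" using snoc.prems ks' J_snoc_sub by blast+
  then have "xs = ys" using snoc.IH snoc.prems(1) ks' by simp
  then show ?case using snoc.prems ks' J_snoc_disj[of x y xs] by auto
qed

lemma J_disj: "length ks = length ks' \<Longrightarrow> ks \<noteq> ks' \<Longrightarrow> J p ks \<inter> J p ks' = {}"
  using J_unique by blast

lemma emeasure_J: "emeasure lborel (J p ks) = ennreal (p ks)"
  by (simp add: J_def p_nonneg)

definition path :: "real \<Rightarrow> nat \<Rightarrow> nat list" where
  "path t k = (THE ks. length ks = k \<and> t \<in> J p ks)"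

lemma path_eq: assumes "length ks = k" "t \<in> J p ks" shows "path t k = ks"
  unfolding path_def
proof (rule the_equality)
  show "length ks = k \<and> t \<in> J p ks" using assms by simp
  fix ks' assume "length ks' = k \<and> t \<in> J p ks'"
  then show "ks' = ks" using J_unique[of ks' ks t] assms by simp
qed

lemma path_spec: "t \<in> {0..<1} \<Longrightarrow> length (path t k) = k \<and> t \<in> J p (path t k)"
proof -
  assume "t \<in> {0..<1}"
  then obtain ks where "length ks = k" "t \<in> J p ks" using J_exists by blast
  then show ?thesis using path_eq[of ks k t] by simp
qed

lemma path_take: "t \<in> {0..<1} \<Longrightarrow> k \<le> m \<Longrightarrow> take k (path t m) = path t k"
  using path_spec[of t m] J_take[of k "path t m"] by (intro path_eq[symmetric]) auto

lemma path_pos: "t \<in> {0..<1} \<Longrightarrow> p (path t k) > 0"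
  using path_spec[of t k] by (auto simp: J_def)

end

lemma pow_half_small: "e > 0 \<Longrightarrow> \<exists>l. 2 * (1/2::real)^l < e"
proof -
  assume "e > 0"
  then obtain n where "(1/2::real)^n < e/2" using real_arch_pow_inv[of "e/2" "1/2::real"] by auto
  then show ?thesis by (intro exI[of _ n]) simp
qed

lemma space_unitI[simp]: "space unitI = {0..<1}"
  by (simp add: unitI_def space_restrict_space)

lemma sets_unitI_iff: "A \<in> sets unitI \<longleftrightarrow> A \<subseteq> {0..<1} \<and> A \<in> sets borel"
  unfolding unitI_def by (subst sets_restrict_space_iff) auto

lemma emeasure_unitI: "A \<subseteq> {0..<1} \<Longrightarrow> emeasure unitI A = emeasure lborel A"
  unfolding unitI_def by (rule emeasure_restrict_space) auto

lemma prob_space_unitI: "prob_space unitI"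
  by (rule prob_spaceI) (simp add: emeasure_unitI)

locale masses_cells = masses p for p +
  fixes C :: "nat list \<Rightarrow> 'z::{complete_space,second_countable_topology} set"
  assumes C_def: "C = cell"
  assumes ne: "\<And>ks. 0 < p ks \<Longrightarrow> C ks \<noteq> {}"
begin

definition zrep :: "nat list \<Rightarrow> 'z" where "zrep ks = (SOME z. z \<in> C ks)"
definition phik :: "real \<Rightarrow> nat \<Rightarrow> 'z" where "phik t k = zrep (path t k)"
definition phi :: "real \<Rightarrow> 'z" where "phi t = lim (phik t)"

lemma phik_in0: "t \<in> {0..<1} \<Longrightarrow> phik t k \<in> cell (path t k)"
  unfolding phik_def zrep_def using ne[OF path_pos] C_def by (metis ex_in_conv someI_ex)

lemma path_cell_mono: "t \<in> {0..<1} \<Longrightarrow> k \<le> m \<Longrightarrow> cell (path t m) \<subseteq> cell (path t k)"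
  using cell_take[of k "path t m"] path_take[of t k m] path_spec[of t m] by simp

lemma phik_in: "t \<in> {0..<1} \<Longrightarrow> k \<le> m \<Longrightarrow> phik t m \<in> cell (path t k)"
  using phik_in0 path_cell_mono by blast

lemma phik_dist:
  assumes t: "t \<in> {0..<1}" and "Suc l \<le> m" "Suc l \<le> m'"
  shows "dist (phik t m) (phik t m') < 2 * (1/2)^l"
  using cell_dist[OF phik_in[OF t assms(2)] phik_in[OF t assms(3)]] path_spec[OF t] by simp

lemma phik_Cauchy: "t \<in> {0..<1} \<Longrightarrow> Cauchy (phik t)"
proof (rule metric_CauchyI)
  fix e :: real assume t: "t \<in> {0..<1}" and "e > 0"
  then obtain l where l: "2 * (1/2::real)^l < e" using pow_half_small by blast
  show "\<exists>M. \<forall>m\<ge>M. \<forall>n\<ge>M. dist (phik t m) (phik t n) < e"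
    using phik_dist[OF t] l by (intro exI[of _ "Suc l"]) (meson less_trans)
qed

lemma phik_lim: "t \<in> {0..<1} \<Longrightarrow> phik t \<longlonglongrightarrow> phi t"
  unfolding phi_def using phik_Cauchy Cauchy_convergent convergent_LIMSEQ_iff by blast

lemma phi_close:
  assumes t: "t \<in> {0..<1}" and y: "y \<in> cell (path t (Suc l))"
  shows "dist (phi t) y \<le> 2 * (1/2)^l"
proof -
  have "(\<lambda>m. dist (phik t m) y) \<longlonglongrightarrow> dist (phi t) y"
    by (intro tendsto_intros phik_lim t)
  moreover have "\<forall>m\<ge>Suc l. dist (phik t m) y \<le> 2 * (1/2)^l"
    using cell_dist[OF phik_in[OF t] y] path_spec[OF t] by (simp add: less_imp_le)
  ultimately show ?thesis by (intro LIMSEQ_le_const2) auto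
qed

lemma phi_closed:
  assumes F: "closed F" and t: "t \<in> {0..<1}" and hit: "\<And>k. cell (path t k) \<inter> F \<noteq> {}"
  shows "phi t \<in> F"
proof (rule closed_approachable[OF F, THEN iffD1], intro allI impI)
  fix e :: real assume "e > 0"
  then obtain l where l: "2 * (1/2::real)^l < e" using pow_half_small by blast
  obtain y where y: "y \<in> cell (path t (Suc l))" "y \<in> F" using hit[of "Suc l"] by blast
  show "\<exists>y\<in>F. dist y (phi t) < e"
    using phi_close[OF t y(1)] l y(2) by (intro bexI[of _ y]) (auto simp: dist_commute)
qed

lemma path_meas: "(\<lambda>t. path t k) \<in> unitI \<rightarrow>\<^sub>M count_space UNIV"
proof (subst measurable_count_space_eq2_countable, safe)
  fix ks :: "nat list"
  have "(\<lambda>t. path t k) -` {ks} \<inter> space unitI = (if length ks = k then J p ks else {})"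
  proof (cases "length ks = k")
    case True
    have "path t k = ks \<longleftrightarrow> t \<in> J p ks" if "t \<in> {0..<1}" for t
      using path_eq[OF True, of t] path_spec[OF that, of k] by auto
    then show ?thesis using True J_sub01[of ks] by (auto simp: subset_iff)
  next
    case False
    then show ?thesis using path_spec by auto
  qed
  moreover have "J p ks \<in> sets unitI" using J_sub01 by (simp add: sets_unitI_iff J_def)
  ultimately show "(\<lambda>t. path t k) -` {ks} \<inter> space unitI \<in> sets unitI" by simp
qed auto

lemma phik_meas: "(\<lambda>t. phik t k) \<in> borel_measurable unitI"
  unfolding phik_def by (rule measurable_compose[OF path_meas]) simp

lemma phi_meas: "phi \<in> borel_measurable unitI"
  by (rule borel_measurable_LIMSEQ_metric[where f="\<lambda>i t. phik t i", OF phik_meas]) (simp add: phik_lim)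

lemma phi_bound:
  assumes F: "closed F"
  shows "(INF k. \<integral>\<^sup>+ ks. ennreal (p ks) \<partial>count_space {ks. length ks = k \<and> cell ks \<inter> F \<noteq> {}})
          \<le> emeasure (distr unitI borel phi) F"
proof -
  define G where "G k = {ks. length ks = k \<and> cell ks \<inter> F \<noteq> {}}" for k
  define E where "E k = {t\<in>{0..<1}. cell (path t k) \<inter> F \<noteq> {}}" for k
  have EG: "E k = (\<Union>ks\<in>G k. J p ks)" for k
  proof
    show "E k \<subseteq> (\<Union>ks\<in>G k. J p ks)"
      using path_spec by (auto simp: E_def G_def)
    show "(\<Union>ks\<in>G k. J p ks) \<subseteq> E k"
    proof
      fix t assume "t \<in> (\<Union>ks\<in>G k. J p ks)"
      then obtain ks where ks: "ks \<in> G k" "t \<in> J p ks" by blast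
      then have "t \<in> {0..<1}" using J_sub01 by blast
      moreover have "path t k = ks" using ks by (intro path_eq) (auto simp: G_def)
      ultimately show "t \<in> E k" using ks by (auto simp: E_def G_def)
    qed
  qed
  have Jsets: "J p ks \<in> sets lborel" for ks by (simp add: J_def)
  have cntG: "countable (G k)" for k by (rule countable_subset[OF subset_UNIV]) simp
  have disjG: "disjoint_family_on (J p) (G k)" for k
    using J_disj by (auto simp: disjoint_family_on_def G_def)
  have Emeas: "emeasure lborel (E k) = (\<integral>\<^sup>+ ks. ennreal (p ks) \<partial>count_space (G k))" for k
    unfolding EG by (subst emeasure_UN_countable[OF Jsets cntG disjG]) (simp add: emeasure_J)
  have Esets: "E k \<in> sets lborel" for k
    unfolding EG using cntG by (intro sets.countable_UN'' Jsets) auto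
  have dec: "decseq E"
  proof (rule decseq_SucI)
    fix k show "E (Suc k) \<subseteq> E k"
      using path_cell_mono[of _ k "Suc k"] by (auto simp: E_def)
  qed
  have fin: "emeasure lborel (E 0) \<noteq> \<infinity>"
  proof -
    have "emeasure lborel (E 0) \<le> emeasure lborel {0..<1::real}"
      by (rule emeasure_mono) (auto simp: E_def)
    then show ?thesis by (auto simp: top_unique)
  qed
  have "(INF k. emeasure lborel (E k)) = emeasure lborel (\<Inter>k. E k)"
    by (rule INF_emeasure_decseq'[OF Esets dec]) (use fin in blast)
  also have "\<dots> \<le> emeasure lborel {t\<in>{0..<1}. phi t \<in> F}"
  proof (rule emeasure_mono)
    show "(\<Inter>k. E k) \<subseteq> {t\<in>{0..<1}. phi t \<in> F}"
      using phi_closed[OF F] by (auto simp: E_def)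
    have "{t\<in>{0..<1}. phi t \<in> F} = phi -` F \<inter> space unitI" by auto
    also have "\<dots> \<in> sets unitI" using phi_meas F by (intro measurable_sets) (auto intro: borel_closed)
    finally show "{t\<in>{0..<1}. phi t \<in> F} \<in> sets lborel" by (simp add: sets_unitI_iff)
  qed
  also have "\<dots> = emeasure (distr unitI borel phi) F"
  proof -
    have "emeasure (distr unitI borel phi) F = emeasure unitI (phi -` F \<inter> space unitI)"
      using phi_meas F by (intro emeasure_distr) (auto intro: borel_closed)
    also have "\<dots> = emeasure lborel {t\<in>{0..<1}. phi t \<in> F}"
      by (subst emeasure_unitI) (auto intro!: arg_cong[where f="emeasure lborel"])
    finally show ?thesis by simp
  qed
  finally show ?thesis unfolding Emeas G_def by simp
qed

end

lemma measure_eq_closed_le: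
  fixes M N :: "'z::{complete_space,second_countable_topology} measure"
  assumes M: "prob_space M" "sets M = sets borel" and N: "prob_space N" "sets N = sets borel"
    and le: "\<And>F. closed F \<Longrightarrow> emeasure M F \<le> emeasure N F"
  shows "N = M"
proof -
  interpret M: prob_space M by fact
  interpret N: prob_space N by fact
  have sM: "space M = UNIV" using sets_eq_imp_space_eq[OF M(2)] by simp
  have sN: "space N = UNIV" using sets_eq_imp_space_eq[OF N(2)] by simp
  have openle: "emeasure N U \<le> emeasure M U" if U: "open U" for U
  proof -
    have c: "closed (UNIV - U)" using U by (simp add: closed_def Compl_eq_Diff_UNIV[symmetric])
    have U': "U \<in> sets borel" using U by (rule borel_open)
    have "measure M (UNIV - U) \<le> measure N (UNIV - U)"
      using le[OF c] by (simp add: M.emeasure_eq_measure N.emeasure_eq_measure)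
    then have "measure N U \<le> measure M U"
      using M.prob_compl[of U] N.prob_compl[of U] U' M(2) N(2) sM sN by simp
    then show ?thesis by (simp add: M.emeasure_eq_measure N.emeasure_eq_measure)
  qed
  have borelle: "emeasure N B \<le> emeasure M B" if B: "B \<in> sets borel" for B
  proof -
    have "emeasure M B = (INF U\<in>{U. B \<subseteq> U \<and> open U}. emeasure M U)"
      by (rule outer_regular[OF M(2) _ B]) simp
    moreover have "emeasure N B \<le> (INF U\<in>{U. B \<subseteq> U \<and> open U}. emeasure M U)"
    proof (rule INF_greatest)
      fix U assume "U \<in> {U. B \<subseteq> U \<and> open U}"
      then have "B \<subseteq> U" "open U" by auto
      then have "emeasure N B \<le> emeasure N U"
        using N(2) by (intro emeasure_mono) (auto intro: borel_open)
      also have "\<dots> \<le> emeasure M U" using openle \<open>open U\<close> by blast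
      finally show "emeasure N B \<le> emeasure M U" .
    qed
    ultimately show ?thesis by simp
  qed
  show ?thesis
  proof (rule measure_eqI)
    show "sets N = sets M" using M N by simp
    fix B assume "B \<in> sets N"
    then have B: "B \<in> sets borel" using N by simp
    have B': "UNIV - B \<in> sets borel" using B by auto
    have "measure N (UNIV - B) \<le> measure M (UNIV - B)"
      using borelle[OF B'] by (simp add: M.emeasure_eq_measure N.emeasure_eq_measure)
    then have "measure M B \<le> measure N B"
      using M.prob_compl[of B] N.prob_compl[of B] B M(2) N(2) sM sN by simp
    then have "emeasure M B \<le> emeasure N B" by (simp add: M.emeasure_eq_measure N.emeasure_eq_measure)
    then show "emeasure N B = emeasure M B" using borelle[OF B] by simp
  qed
qed

lemma parameter_exists:
  fixes \<mu> :: "'z::{complete_space,second_countable_topology} measure"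
  assumes P: "prob_space \<mu>" and S: "sets \<mu> = sets borel"
  shows "\<exists>\<phi>. parameter \<mu> \<phi>"
proof -
  interpret prob_space \<mu> by fact
  have sp: "space \<mu> = UNIV" using sets_eq_imp_space_eq[OF S] by simp
  define p where "p ks = measure \<mu> (cell ks :: 'z set)" for ks
  have cs: "cell ks \<in> sets \<mu>" for ks :: "nat list" using S cell_borel by simp
  interpret masses p
  proof
    show "p [] = 1" using prob_space sp by (simp add: p_def)
    fix ks show "0 \<le> p ks" by (simp add: p_def)
    show "(\<lambda>i. p (ks @ [i])) sums p ks"
      unfolding p_def using finite_measure_UNION[of "\<lambda>i. cell (ks @ [i])"] cs disjoint_children
      by (auto simp: cell_children[of ks, symmetric])
  qed
  interpret masses_cells p "cell :: nat list \<Rightarrow> 'z set"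
    by unfold_locales (auto simp: p_def)
  have le: "emeasure \<mu> F \<le> emeasure (distr unitI borel phi) F" if F: "closed F" for F
  proof -
    have "emeasure \<mu> F \<le> (\<integral>\<^sup>+ ks. ennreal (p ks) \<partial>count_space {ks. length ks = k \<and> cell ks \<inter> F \<noteq> {}})" for k
    proof -
      let ?G = "{ks. length ks = k \<and> cell ks \<inter> F \<noteq> {}}"
      have "F \<subseteq> (\<Union>ks\<in>?G. cell ks)"
      proof
        fix z assume "z \<in> F"
        then have "code z k \<in> ?G" "z \<in> cell (code z k)" using in_cell[of z k] by auto
        then show "z \<in> (\<Union>ks\<in>?G. cell ks)" by blast
      qed
      then have "emeasure \<mu> F \<le> emeasure \<mu> (\<Union>ks\<in>?G. cell ks)"
        by (intro emeasure_mono) (auto intro: sets.countable_UN'' cs)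
      also have "\<dots> = (\<integral>\<^sup>+ ks. emeasure \<mu> (cell ks) \<partial>count_space ?G)"
        by (rule emeasure_UN_countable[OF cs]) (auto intro: countable_subset[OF subset_UNIV] simp: disjoint_family_on_def cell_disj)
      also have "\<dots> = (\<integral>\<^sup>+ ks. ennreal (p ks) \<partial>count_space ?G)"
        by (simp add: p_def emeasure_eq_measure)
      finally show ?thesis .
    qed
    then have "emeasure \<mu> F \<le> (INF k. \<integral>\<^sup>+ ks. ennreal (p ks) \<partial>count_space {ks. length ks = k \<and> cell ks \<inter> F \<noteq> {}})"
      by (rule INF_greatest)
    also have "\<dots> \<le> emeasure (distr unitI borel phi) F" by (rule phi_bound[OF F])
    finally show ?thesis .
  qed
  have "distr unitI borel phi = \<mu>"
    by (rule measure_eq_closed_le[OF P S _ _ le])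
       (auto intro: prob_space.prob_space_distr prob_space_unitI phi_meas)
  then show ?thesis unfolding parameter_def using phi_meas by blast
qed

lemma nn_count_mono:
  assumes "A \<subseteq> B" shows "integral\<^sup>N (count_space A) f \<le> integral\<^sup>N (count_space B) f"
proof -
  have "integral\<^sup>N (count_space A) f = (\<integral>\<^sup>+x. f x * indicator A x \<partial>count_space UNIV)"
    by (subst nn_integral_count_space_indicator[symmetric]) (simp_all add: NO_MATCH_def)
  also have "\<dots> \<le> (\<integral>\<^sup>+x. f x * indicator B x \<partial>count_space UNIV)"
    by (rule nn_integral_mono) (use assms in \<open>auto simp: indicator_def\<close>)
  also have "\<dots> = integral\<^sup>N (count_space B) f"
    by (subst nn_integral_count_space_indicator[symmetric]) (simp_all add: NO_MATCH_def)
  finally show ?thesis .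
qed

lemma lim_sums:
  fixes a :: "nat \<Rightarrow> nat \<Rightarrow> real" and b :: "nat \<Rightarrow> real"
  assumes sums: "\<And>n. (\<lambda>i. a n i) sums b n" and nn: "\<And>n i. 0 \<le> a n i"
    and la: "\<And>i. (\<lambda>n. a n i) \<longlonglongrightarrow> \<alpha> i" and lb: "b \<longlonglongrightarrow> \<beta>"
    and tail: "\<And>e. e > 0 \<Longrightarrow> \<exists>M. \<forall>n N. M \<le> N \<longrightarrow> b n - (\<Sum>i<N. a n i) \<le> e"
  shows "\<alpha> sums \<beta>"
proof -
  have S: "(\<lambda>n. \<Sum>i<N. a n i) \<longlonglongrightarrow> (\<Sum>i<N. \<alpha> i)" for N
    by (intro tendsto_sum la)
  have up: "(\<Sum>i<N. \<alpha> i) \<le> \<beta>" for N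
  proof (rule LIMSEQ_le[OF S lb])
    show "\<exists>M. \<forall>n\<ge>M. (\<Sum>i<N. a n i) \<le> b n"
      using sum_le_suminf[OF sums_summable[OF sums], of "{..<N}"] nn sums_unique[OF sums] by auto
  qed
  have low: "\<beta> - e \<le> (\<Sum>i<N. \<alpha> i)" if "e > 0" "M \<le> N" "\<forall>n N. M \<le> N \<longrightarrow> b n - (\<Sum>i<N. a n i) \<le> e" for e M N
  proof (rule LIMSEQ_le[OF tendsto_diff[OF lb tendsto_const] S])
    show "\<exists>K. \<forall>n\<ge>K. b n - e \<le> (\<Sum>i<N. a n i)"
    proof (intro exI allI impI)
      fix n :: nat
      have "b n - (\<Sum>i<N. a n i) \<le> e" using that(2,3) by blast
      then show "b n - e \<le> (\<Sum>i<N. a n i)" by linarith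
    qed
  qed
  show ?thesis unfolding sums_def
  proof (rule metric_LIMSEQ_I)
    fix r :: real assume "r > 0"
    then obtain M where M: "\<forall>n N. M \<le> N \<longrightarrow> b n - (\<Sum>i<N. a n i) \<le> r/2" using tail[of "r/2"] by auto
    show "\<exists>no. \<forall>n\<ge>no. dist (\<Sum>i<n. \<alpha> i) \<beta> < r"
    proof (intro exI allI impI)
      fix N assume "M \<le> N"
      then have "\<beta> - r/2 \<le> (\<Sum>i<N. \<alpha> i)" using low[of "r/2" M N] M \<open>r > 0\<close> by simp
      then show "dist (\<Sum>i<N. \<alpha> i) \<beta> < r" using up[of N] \<open>r > 0\<close> by (simp add: dist_real_def)
    qed
  qed
qed

lemma tight1:
  fixes M :: "'z::{complete_space,second_countable_topology} measure"
  assumes P: "prob_space M" and S: "sets M = sets borel" and e: "e > 0"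
  shows "\<exists>K. compact K \<and> measure M (UNIV - K) \<le> e"
proof -
  interpret prob_space M by fact
  have sp: "space M = UNIV" using sets_eq_imp_space_eq[OF S] by simp
  have "emeasure M UNIV = (SUP K\<in>{K. K \<subseteq> UNIV \<and> compact K}. emeasure M K)"
    by (rule inner_regular[OF S]) auto
  moreover have "emeasure M UNIV = 1" using emeasure_space_1 sp by simp
  moreover have "ennreal (1 - e) < 1" using e by (simp add: ennreal_lessI)
  ultimately obtain K where K: "compact K" "ennreal (1 - e) < emeasure M K"
    by (metis (no_types, lifting) less_SUP_iff mem_Collect_eq)
  have Ks: "K \<in> sets M" using S K(1) by (simp add: borel_compact)
  have "1 - e < measure M K"
  proof (cases "1 - e < 0")
    case True then show ?thesis by (meson less_le_trans measure_nonneg)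
  next
    case False then show ?thesis using K(2) by (simp add: emeasure_eq_measure ennreal_less_iff)
  qed
  then have "measure M (UNIV - K) \<le> e" using prob_compl[OF Ks] sp by simp
  then show ?thesis using K(1) by blast
qed

lemma limit_measure:
  fixes \<mu> :: "nat \<Rightarrow> 'z::{complete_space,second_countable_topology} measure"
  assumes P: "\<And>n. prob_space (\<mu> n)" and S: "\<And>n. sets (\<mu> n) = sets borel"
    and tight: "\<And>e. e > 0 \<Longrightarrow> \<exists>K. compact K \<and> (\<forall>n. measure (\<mu> n) (UNIV - K) \<le> e)"
    and conv: "\<And>ks. convergent (\<lambda>n. measure (\<mu> n) (cell ks))"
  shows "\<exists>\<nu>. prob_space \<nu> \<and> sets \<nu> = sets borel \<and>
     (\<forall>F c. closed F \<longrightarrow> (\<forall>e>0. \<exists>N. \<forall>n\<ge>N. c - e \<le> measure (\<mu> n) F) \<longrightarrow> c \<le> measure \<nu> F)"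
proof -
  have sp: "space (\<mu> n) = UNIV" for n using sets_eq_imp_space_eq[OF S[of n]] by simp
  have cs: "cell ks \<in> sets (\<mu> n)" for ks n using S cell_borel by simp
  have fm: "finite_measure (\<mu> n)" for n using P[of n] unfolding prob_space_def by blast
  define p where "p ks = lim (\<lambda>n. measure (\<mu> n) (cell ks :: 'z set))" for ks
  have plim: "(\<lambda>n. measure (\<mu> n) (cell ks)) \<longlonglongrightarrow> p ks" for ks
    unfolding p_def using conv convergent_LIMSEQ_iff by blast
  have sums_n: "(\<lambda>i. measure (\<mu> n) (cell (ks @ [i]))) sums measure (\<mu> n) (cell ks)" for n ks
    using finite_measure.finite_measure_UNION[OF fm, of "\<lambda>i. cell (ks @ [i])"] cs disjoint_children
    by (auto simp: cell_children[of ks, symmetric])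
  interpret masses p
  proof
    have "(\<lambda>n. measure (\<mu> n) (cell [])) = (\<lambda>n. 1)"
    proof
      fix n show "measure (\<mu> n) (cell []) = 1"
        using prob_space.prob_space[OF P[of n]] sp[of n] by simp
    qed
    then show "p [] = 1" using plim[of "[]"] by (simp add: LIMSEQ_const_iff)
    fix ks show "0 \<le> p ks" by (rule LIMSEQ_le_const[OF plim]) simp
    show "(\<lambda>i. p (ks @ [i])) sums p ks"
    proof (rule lim_sums[OF sums_n _ plim plim])
      fix e :: real assume "e > 0"
      then obtain K where K: "compact K" "\<And>n. measure (\<mu> n) (UNIV - K) \<le> e" using tight by blast
      obtain M where M: "\<forall>z\<in>K. idx (length ks) z < M" using compact_idx_bound[OF K(1)] by blast
      have KS: "UNIV - K \<in> sets (\<mu> n)" for n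
        using sets.compl_sets[OF borel_compact[OF K(1)]] S[of n] by simp
      show "\<exists>M. \<forall>n N. M \<le> N \<longrightarrow> measure (\<mu> n) (cell ks) - (\<Sum>i<N. measure (\<mu> n) (cell (ks @ [i]))) \<le> e"
      proof (intro exI[of _ M] allI impI)
        fix n N assume "M \<le> N"
        have "cell ks \<subseteq> (\<Union>i<N. cell (ks @ [i])) \<union> (UNIV - K)"
        proof
          fix z :: 'z assume "z \<in> cell ks"
          show "z \<in> (\<Union>i<N. cell (ks @ [i])) \<union> (UNIV - K)"
          proof (cases "z \<in> K")
            case True
            then have "idx (length ks) z < N" using M \<open>M \<le> N\<close> by auto
            then show ?thesis using \<open>z \<in> cell ks\<close> by (auto simp: cell_snoc)
          qed simp
        qed
        then have "measure (\<mu> n) (cell ks) \<le> measure (\<mu> n) ((\<Union>i<N. cell (ks @ [i])) \<union> (UNIV - K))"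
          using cs sp KS by (intro finite_measure.finite_measure_mono[OF fm]) auto
        also have "\<dots> \<le> measure (\<mu> n) (\<Union>i<N. cell (ks @ [i])) + measure (\<mu> n) (UNIV - K)"
          using cs sp KS by (intro measure_Un_le) auto
        also have "measure (\<mu> n) (\<Union>i<N. cell (ks @ [i])) = (\<Sum>i<N. measure (\<mu> n) (cell (ks @ [i])))"
          using disjoint_children[of ks] cs
          by (intro finite_measure.finite_measure_finite_Union[OF fm]) (auto simp: disjoint_family_on_def)
        finally show "measure (\<mu> n) (cell ks) - (\<Sum>i<N. measure (\<mu> n) (cell (ks @ [i]))) \<le> e"
          using K(2)[of n] by simp
      qed
    qed simp
  qed
  interpret masses_cells p "cell :: nat list \<Rightarrow> 'z set"
  proof
    fix ks assume "0 < p ks"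
    show "cell ks \<noteq> ({} :: 'z set)"
    proof
      assume "cell ks = ({} :: 'z set)"
      then have "p ks = 0" using plim[of ks] by (simp add: LIMSEQ_const_iff)
      then show False using \<open>0 < p ks\<close> by simp
    qed
  qed simp
  define \<nu> where "\<nu> = distr unitI borel phi"
  have P\<nu>: "prob_space \<nu>" unfolding \<nu>_def by (intro prob_space.prob_space_distr prob_space_unitI phi_meas)
  have S\<nu>: "sets \<nu> = sets borel" by (simp add: \<nu>_def)
  have main: "c \<le> measure \<nu> F" if F: "closed F" and hyp: "\<forall>e>0. \<exists>N. \<forall>n\<ge>N. c - e \<le> measure (\<mu> n) F" for F c
  proof -
    have T: "ennreal c \<le> (\<integral>\<^sup>+ ks. ennreal (p ks) \<partial>count_space {ks. length ks = k \<and> cell ks \<inter> F \<noteq> {}})" for k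
    proof (rule ennreal_le_epsilon)
      fix e' :: real assume "0 < e'"
      define e where "e = e' / 3"
      have e: "e > 0" using \<open>0 < e'\<close> by (simp add: e_def)
      let ?G = "{ks. length ks = k \<and> cell ks \<inter> F \<noteq> {}}"
      obtain K where K: "compact K" "\<And>n. measure (\<mu> n) (UNIV - K) \<le> e" using tight[OF e] by blast
      obtain Nb where Nb: "\<And>l. \<forall>z\<in>K. idx l z < Nb l" using compact_idx_bound[OF K(1)] by metis
      have KS: "UNIV - K \<in> sets (\<mu> n)" for n
        using sets.compl_sets[OF borel_compact[OF K(1)]] S[of n] by simp
      define G' where "G' = {ks \<in> ?G. \<forall>l<k. ks ! l < Nb l}"
      have finG': "finite G'"
      proof (rule finite_subset)
        show "G' \<subseteq> {xs. set xs \<subseteq> {..<(\<Sum>l<k. Nb l)} \<and> length xs = k}"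
        proof
          fix xs assume xs: "xs \<in> G'"
          have "x < (\<Sum>l<k. Nb l)" if xin: "x \<in> set xs" for x
          proof -
            obtain l where l: "l < length xs" "xs ! l = x" using xin by (metis in_set_conv_nth)
            then have l: "l < k" "x = xs ! l" using xs by (auto simp: G'_def)
            then have "x < Nb l" using xs by (auto simp: G'_def)
            also have "Nb l \<le> (\<Sum>l<k. Nb l)" using l by (intro member_le_sum) auto
            finally show ?thesis .
          qed
          then show "xs \<in> {xs. set xs \<subseteq> {..<(\<Sum>l<k. Nb l)} \<and> length xs = k}"
            using xs by (auto simp: G'_def)
        qed
      qed (rule finite_lists_length_eq, simp)
      have G'G: "G' \<subseteq> ?G" by (auto simp: G'_def)
      have bound: "measure (\<mu> n) F \<le> (\<Sum>ks\<in>G'. measure (\<mu> n) (cell ks)) + e" for n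
      proof -
        have "F \<subseteq> (\<Union>ks\<in>G'. cell ks) \<union> (UNIV - K)"
        proof
          fix z assume "z \<in> F"
          show "z \<in> (\<Union>ks\<in>G'. cell ks) \<union> (UNIV - K)"
          proof (cases "z \<in> K")
            case True
            have "code z k \<in> G'" using True Nb \<open>z \<in> F\<close> in_cell[of z k]
              by (auto simp: G'_def nth_code)
            then show ?thesis using in_cell[of z k] by blast
          qed simp
        qed
        then have "measure (\<mu> n) F \<le> measure (\<mu> n) ((\<Union>ks\<in>G'. cell ks) \<union> (UNIV - K))"
          using cs sp finG' KS by (intro finite_measure.finite_measure_mono[OF fm]) auto
        also have "\<dots> \<le> measure (\<mu> n) (\<Union>ks\<in>G'. cell ks) + measure (\<mu> n) (UNIV - K)"
          using cs sp finG' KS by (intro measure_Un_le) auto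
        also have "measure (\<mu> n) (\<Union>ks\<in>G'. cell ks) = (\<Sum>ks\<in>G'. measure (\<mu> n) (cell ks))"
        proof -
          have dj: "disjoint_family_on (cell :: nat list \<Rightarrow> 'z set) G'"
            unfolding disjoint_family_on_def
          proof (intro ballI impI)
            fix m n assume "m \<in> G'" "n \<in> G'" "m \<noteq> n"
            then show "cell m \<inter> (cell n :: 'z set) = {}" by (intro cell_disj) (auto simp: G'_def)
          qed
          show ?thesis using cs finG' dj
            by (intro finite_measure.finite_measure_finite_Union[OF fm]) auto
        qed
        finally show ?thesis using K(2)[of n] by simp
      qed
      obtain N where N: "\<forall>n\<ge>N. c - e \<le> measure (\<mu> n) F" using hyp e by blast
      have "c - 2 * e \<le> (\<Sum>ks\<in>G'. p ks)"
      proof (rule LIMSEQ_le_const[OF tendsto_sum[OF plim]])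
        show "\<exists>N. \<forall>n\<ge>N. c - 2 * e \<le> (\<Sum>ks\<in>G'. measure (\<mu> n) (cell ks))"
          using N bound by (intro exI[of _ N]) (smt (verit))
      qed
      have "ennreal (\<Sum>ks\<in>G'. p ks) = (\<integral>\<^sup>+ ks. ennreal (p ks) \<partial>count_space G')"
        using finG' by (simp add: nn_integral_count_space_finite sum_ennreal p_nonneg)
      also have "\<dots> \<le> (\<integral>\<^sup>+ ks. ennreal (p ks) \<partial>count_space ?G)" by (rule nn_count_mono[OF G'G])
      finally have I: "ennreal (\<Sum>ks\<in>G'. p ks) \<le> (\<integral>\<^sup>+ ks. ennreal (p ks) \<partial>count_space ?G)" .
      show "ennreal c \<le> (\<integral>\<^sup>+ ks. ennreal (p ks) \<partial>count_space ?G) + ennreal e'"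
      proof (cases "c - 2 * e \<le> 0")
        case True
        then have "ennreal c \<le> ennreal e'" using e by (intro ennreal_leI) (simp add: e_def)
        then show ?thesis by (meson add_increasing zero_le order_trans)
      next
        case False
        have "ennreal c \<le> ennreal (c - 2 * e) + ennreal e'"
          using False e by (subst ennreal_plus[symmetric]) (auto intro!: ennreal_leI simp: e_def)
        also have "\<dots> \<le> ennreal (\<Sum>ks\<in>G'. p ks) + ennreal e'"
          using \<open>c - 2 * e \<le> (\<Sum>ks\<in>G'. p ks)\<close> by (intro add_mono ennreal_leI) auto
        also have "\<dots> \<le> (\<integral>\<^sup>+ ks. ennreal (p ks) \<partial>count_space ?G) + ennreal e'"
          using I by (rule add_mono) simp
        finally show ?thesis .
      qed
    qed
    then have "ennreal c \<le> (INF k. \<integral>\<^sup>+ ks. ennreal (p ks) \<partial>count_space {ks. length ks = k \<and> cell ks \<inter> F \<noteq> {}})"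
      by (rule INF_greatest)
    also have "\<dots> \<le> emeasure \<nu> F" unfolding \<nu>_def by (rule phi_bound[OF F])
    also have "\<dots> = ennreal (measure \<nu> F)" using P\<nu> unfolding prob_space_def by (simp add: finite_measure.emeasure_eq_measure)
    finally have "ennreal c \<le> ennreal (measure \<nu> F)" .
    moreover have "0 \<le> measure \<nu> F" by (rule measure_nonneg)
    ultimately show ?thesis
    proof (cases "c \<le> 0")
      case False then show ?thesis using \<open>ennreal c \<le> ennreal (measure \<nu> F)\<close> by (simp add: ennreal_le_iff2)
    qed linarith
  qed
  show ?thesis using P\<nu> S\<nu> main by blast
qed

lemma dis_le_iff:
  fixes S :: "('a::metric_space \<times> 'b::metric_space) set"
  assumes "S \<noteq> {}"
  shows "dis S \<le> ereal c \<longleftrightarrow> (\<forall>x\<in>S. \<forall>y\<in>S. \<bar>dist (fst x) (fst y) - dist (snd x) (snd y)\<bar> \<le> c)"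
  using assms by (auto simp: dis_def SUP_le_iff)

lemma dis_nonneg:
  fixes S :: "('a::metric_space \<times> 'b::metric_space) set"
  assumes "S \<noteq> {}" shows "0 \<le> dis S"
proof -
  obtain x where x: "x \<in> S" using assms by blast
  have "(x, x) \<in> S \<times> S" using x by simp
  then have "ereal \<bar>dist (fst (fst (x,x))) (fst (snd (x,x))) - dist (snd (fst (x,x))) (snd (snd (x,x)))\<bar>
     \<le> (SUP p\<in>S \<times> S. ereal \<bar>dist (fst (fst p)) (fst (snd p)) - dist (snd (fst p)) (snd (snd p))\<bar>)"
    by (rule SUP_upper)
  then show ?thesis using assms by (simp add: dis_def zero_ereal_def)
qed

lemma dis_singleton: "dis {x} = 0"
  by (simp add: dis_def)

lemma dis_closure:
  fixes T :: "('a::metric_space \<times> 'b::metric_space) set"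
  assumes T: "T \<noteq> {}" and le: "\<forall>x\<in>T. \<forall>y\<in>T. \<bar>dist (fst x) (fst y) - dist (snd x) (snd y)\<bar> \<le> c"
  shows "dis (closure T) \<le> ereal c"
proof -
  define g where "g z = \<bar>dist (fst (fst z)) (fst (snd z)) - dist (snd (fst z)) (snd (snd z))\<bar>"
    for z :: "('a \<times> 'b) \<times> ('a \<times> 'b)"
  have "continuous_on UNIV g" unfolding g_def by (intro continuous_intros)
  then have cl: "closed {z. g z \<le> c}" by (intro closed_Collect_le continuous_intros)
  have "T \<times> T \<subseteq> {z. g z \<le> c}"
  proof (rule subsetI)
    fix z assume "z \<in> T \<times> T"
    then have "fst z \<in> T" "snd z \<in> T" by auto
    then show "z \<in> {z. g z \<le> c}" using le by (simp add: g_def)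
  qed
  then have "closure (T \<times> T) \<subseteq> {z. g z \<le> c}" using cl by (rule closure_minimal)
  then have "\<forall>x\<in>closure T. \<forall>y\<in>closure T. g (x, y) \<le> c" by (auto simp: closure_Times)
  then show ?thesis using T by (subst dis_le_iff) (auto simp: g_def)
qed

lemma abs_dist_diff_le:
  fixes a b a' b' :: "'a::metric_space"
  shows "\<bar>dist a b - dist a' b'\<bar> \<le> dist a a' + dist b b'"
proof -
  have h1: "dist a b \<le> dist a a' + dist a' b" by (rule dist_triangle)
  have h2: "dist a' b \<le> dist a' b' + dist b' b" by (rule dist_triangle)
  have h3: "dist a' b' \<le> dist a' a + dist a b'" by (rule dist_triangle)
  have h4: "dist a b' \<le> dist a b + dist b b'" by (rule dist_triangle)
  have "dist a' a = dist a a'" "dist b' b = dist b b'" by (simp_all add: dist_commute)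
  then show ?thesis using h1 h2 h3 h4 unfolding abs_le_iff by linarith
qed

definition boxset :: "(real \<Rightarrow> real \<Rightarrow> real) \<Rightarrow> (real \<Rightarrow> real \<Rightarrow> real) \<Rightarrow> real set" where
  "boxset \<rho>1 \<rho>2 = {\<epsilon>. \<epsilon> \<ge> 0 \<and> (\<exists>I0. I0 \<in> sets borel \<and> I0 \<subseteq> {0..<1} \<and>
      measure lborel I0 \<ge> 1 - \<epsilon> \<and> (\<forall>s\<in>I0. \<forall>t\<in>I0. \<bar>\<rho>1 s t - \<rho>2 s t\<bar> \<le> \<epsilon>))}"

lemma box_pm_boxset: "box_pm \<rho>1 \<rho>2 = Inf (boxset \<rho>1 \<rho>2)"
  by (simp add: box_pm_def boxset_def)

lemma boxset_ne: "1 \<in> boxset \<rho>1 \<rho>2"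
  unfolding boxset_def mem_Collect_eq by (rule conjI, simp, rule exI[of _ "{}"], simp)

lemma box_pm_nonneg: "0 \<le> box_pm \<rho>1 \<rho>2"
  unfolding box_pm_boxset
proof (rule cInf_greatest)
  show "boxset \<rho>1 \<rho>2 \<noteq> {}" using boxset_ne by blast
qed (auto simp: boxset_def)

lemma box_pm_le: "\<epsilon> \<in> boxset \<rho>1 \<rho>2 \<Longrightarrow> box_pm \<rho>1 \<rho>2 \<le> \<epsilon>"
  unfolding box_pm_boxset by (rule cInf_lower) (auto simp: boxset_def bdd_below_def)

lemma box_pm_lt: "box_pm \<rho>1 \<rho>2 < c \<Longrightarrow> \<exists>\<epsilon>\<in>boxset \<rho>1 \<rho>2. \<epsilon> < c"
  unfolding box_pm_boxset using boxset_ne by (intro cInf_lessD) auto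

definition bset :: "'a::metric_space measure \<Rightarrow> 'b::metric_space measure \<Rightarrow> real set" where
  "bset mX mY = {box_pm (\<lambda>s t. dist (\<phi> s) (\<phi> t)) (\<lambda>s t. dist (\<psi> s) (\<psi> t)) |\<phi> \<psi>.
      parameter mX \<phi> \<and> parameter mY \<psi>}"

lemma box_dist_bset: "box_dist mX mY = Inf (bset mX mY)"
  by (simp add: box_dist_def bset_def)

lemma box_dist_le:
  "parameter mX \<phi> \<Longrightarrow> parameter mY \<psi> \<Longrightarrow>
    box_dist mX mY \<le> box_pm (\<lambda>s t. dist (\<phi> s) (\<phi> t)) (\<lambda>s t. dist (\<psi> s) (\<psi> t))"
  unfolding box_dist_bset by (rule cInf_lower) (auto simp: bset_def bdd_below_def intro: box_pm_nonneg)

lemma fst_meas: "fst \<in> (borel :: ('a::second_countable_topology \<times> 'b::second_countable_topology) measure) \<rightarrow>\<^sub>M borel"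
  by (subst borel_prod[symmetric]) (rule measurable_fst)

lemma snd_meas: "snd \<in> (borel :: ('a::second_countable_topology \<times> 'b::second_countable_topology) measure) \<rightarrow>\<^sub>M borel"
  by (subst borel_prod[symmetric]) (rule measurable_snd)

lemma mm_params:
  fixes mX :: "'a::polish_space measure"
  assumes "mm_measure mX" shows "\<exists>\<phi>. parameter mX \<phi>"
  using assms parameter_exists unfolding mm_measure_def by blast

lemma bset_ne:
  fixes mX :: "'a::polish_space measure" and mY :: "'b::polish_space measure"
  assumes "mm_measure mX" "mm_measure mY" shows "bset mX mY \<noteq> {}"
  using mm_params[OF assms(1)] mm_params[OF assms(2)] unfolding bset_def by blast

lemma box_dist_nonneg:
  fixes mX :: "'a::polish_space measure" and mY :: "'b::polish_space measure"
  assumes "mm_measure mX" "mm_measure mY" shows "0 \<le> box_dist mX mY"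
  unfolding box_dist_bset using bset_ne[OF assms] by (intro cInf_greatest) (auto simp: bset_def intro: box_pm_nonneg)

lemma lower_bound:
  fixes mX :: "'a::polish_space measure" and mY :: "'b::polish_space measure"
  assumes mX: "mm_measure mX" and mY: "mm_measure mY"
    and \<pi>: "\<pi> \<in> transport_plans mX mY" and S: "closed S"
  shows "ereal (box_dist mX mY) \<le> max (ereal (1 - measure \<pi> S)) (dis S)"
proof (cases "dis S = \<infinity>")
  case True then show ?thesis by simp
next
  case False
  then have Sne: "S \<noteq> {}" by (auto simp: dis_def)
  obtain d where d: "dis S = ereal d" using False dis_nonneg[OF Sne] by (cases "dis S") auto
  have d0: "0 \<le> d" using dis_nonneg[OF Sne] d by simp
  have P: "prob_space \<pi>" and Ss: "sets \<pi> = sets borel" and m1: "distr \<pi> borel fst = mX" and m2: "distr \<pi> borel snd = mY"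
    using \<pi> by (auto simp: transport_plans_def)
  obtain \<Phi> where \<Phi>: "parameter \<pi> \<Phi>" using parameter_exists[OF P Ss] by blast
  have \<Phi>m: "\<Phi> \<in> unitI \<rightarrow>\<^sub>M borel" and \<Phi>d: "distr unitI borel \<Phi> = \<pi>" using \<Phi> by (auto simp: parameter_def)
  have p1: "parameter mX (\<lambda>t. fst (\<Phi> t))"
  proof -
    have "(\<lambda>t. fst (\<Phi> t)) = fst \<circ> \<Phi>" by (simp add: o_def)
    moreover have "fst \<circ> \<Phi> \<in> unitI \<rightarrow>\<^sub>M borel" by (rule measurable_comp[OF \<Phi>m fst_meas])
    moreover have "distr unitI borel (fst \<circ> \<Phi>) = mX"
      using distr_distr[OF fst_meas \<Phi>m] \<Phi>d m1 by simp
    ultimately show ?thesis unfolding parameter_def by simp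
  qed
  have p2: "parameter mY (\<lambda>t. snd (\<Phi> t))"
  proof -
    have "(\<lambda>t. snd (\<Phi> t)) = snd \<circ> \<Phi>" by (simp add: o_def)
    moreover have "snd \<circ> \<Phi> \<in> unitI \<rightarrow>\<^sub>M borel" by (rule measurable_comp[OF \<Phi>m snd_meas])
    moreover have "distr unitI borel (snd \<circ> \<Phi>) = mY"
      using distr_distr[OF snd_meas \<Phi>m] \<Phi>d m2 by simp
    ultimately show ?thesis unfolding parameter_def by simp
  qed
  define I0 where "I0 = \<Phi> -` S \<inter> {0..<1}"
  have SB: "S \<in> sets borel" using S by (rule borel_closed)
  have I0u: "I0 \<in> sets unitI" unfolding I0_def using measurable_sets[OF \<Phi>m SB] by simp
  then have I0b: "I0 \<in> sets borel" "I0 \<subseteq> {0..<1}" by (auto simp: sets_unitI_iff)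
  have "measure \<pi> S = measure unitI I0"
    using \<Phi>d measure_distr[OF \<Phi>m SB] by (simp add: I0_def)
  also have "\<dots> = measure lborel I0" using I0b(2) by (simp add: measure_def emeasure_unitI)
  finally have mI0: "measure \<pi> S = measure lborel I0" .
  define \<epsilon> where "\<epsilon> = max (1 - measure \<pi> S) d"
  have "\<epsilon> \<in> boxset (\<lambda>s t. dist (fst (\<Phi> s)) (fst (\<Phi> t))) (\<lambda>s t. dist (snd (\<Phi> s)) (snd (\<Phi> t)))"
    unfolding boxset_def
  proof (intro CollectI conjI exI[of _ I0])
    show "0 \<le> \<epsilon>" using d0 by (simp add: \<epsilon>_def)
    show "I0 \<in> sets borel" "I0 \<subseteq> {0..<1}" by (fact I0b)+
    show "1 - \<epsilon> \<le> measure lborel I0" using mI0 by (simp add: \<epsilon>_def)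
    have "\<forall>x\<in>S. \<forall>y\<in>S. \<bar>dist (fst x) (fst y) - dist (snd x) (snd y)\<bar> \<le> d"
      using d dis_le_iff[OF Sne, of d] by simp
    then show "\<forall>s\<in>I0. \<forall>t\<in>I0. \<bar>dist (fst (\<Phi> s)) (fst (\<Phi> t)) - dist (snd (\<Phi> s)) (snd (\<Phi> t))\<bar> \<le> \<epsilon>"
    proof (intro ballI)
      fix s t assume "s \<in> I0" "t \<in> I0"
      then have "\<Phi> s \<in> S" "\<Phi> t \<in> S" by (auto simp: I0_def)
      moreover assume "\<forall>x\<in>S. \<forall>y\<in>S. \<bar>dist (fst x) (fst y) - dist (snd x) (snd y)\<bar> \<le> d"
      ultimately have "\<bar>dist (fst (\<Phi> s)) (fst (\<Phi> t)) - dist (snd (\<Phi> s)) (snd (\<Phi> t))\<bar> \<le> d" by blast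
      then show "\<bar>dist (fst (\<Phi> s)) (fst (\<Phi> t)) - dist (snd (\<Phi> s)) (snd (\<Phi> t))\<bar> \<le> \<epsilon>" by (simp add: \<epsilon>_def)
    qed
  qed
  then have "box_dist mX mY \<le> \<epsilon>"
    using box_dist_le[OF p1 p2] box_pm_le by (meson order_trans)
  then have "ereal (box_dist mX mY) \<le> ereal \<epsilon>" by simp
  also have "ereal \<epsilon> = max (ereal (1 - measure \<pi> S)) (dis S)" using d by (simp add: \<epsilon>_def max_def)
  finally show ?thesis .
qed

lemma box_dist_lt:
  fixes mX :: "'a::polish_space measure" and mY :: "'b::polish_space measure"
  assumes "mm_measure mX" "mm_measure mY" "box_dist mX mY < c"
  shows "\<exists>\<phi> \<psi>. parameter mX \<phi> \<and> parameter mY \<psi> \<and>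
     box_pm (\<lambda>s t. dist (\<phi> s) (\<phi> t)) (\<lambda>s t. dist (\<psi> s) (\<psi> t)) < c"
proof -
  obtain b where "b \<in> bset mX mY" "b < c"
    using cInf_lessD[OF bset_ne[OF assms(1,2)]] assms(3) by (auto simp: box_dist_bset)
  then show ?thesis unfolding bset_def by blast
qed

lemma upper_approx:
  fixes mX :: "'a::polish_space measure" and mY :: "'b::polish_space measure"
  assumes mX: "mm_measure mX" and mY: "mm_measure mY" and \<delta>: "\<delta> > 0"
  shows "\<exists>\<pi> S. \<pi> \<in> transport_plans mX mY \<and> closed S \<and> S \<noteq> {} \<and>
     1 - measure \<pi> S \<le> box_dist mX mY + \<delta> \<and> dis S \<le> ereal (box_dist mX mY + \<delta>)"
proof -
  let ?V = "box_dist mX mY"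
  obtain \<phi> \<psi> where p1: "parameter mX \<phi>" and p2: "parameter mY \<psi>"
    and lt: "box_pm (\<lambda>s t. dist (\<phi> s) (\<phi> t)) (\<lambda>s t. dist (\<psi> s) (\<psi> t)) < ?V + \<delta>"
    using box_dist_lt[OF mX mY, of "?V + \<delta>"] \<delta> by auto
  obtain \<epsilon> where \<epsilon>: "\<epsilon> \<in> boxset (\<lambda>s t. dist (\<phi> s) (\<phi> t)) (\<lambda>s t. dist (\<psi> s) (\<psi> t))" "\<epsilon> < ?V + \<delta>"
    using box_pm_lt[OF lt] by blast
  then obtain I0 where e0: "0 \<le> \<epsilon>" and I0: "I0 \<in> sets borel" "I0 \<subseteq> {0..<1}" "1 - \<epsilon> \<le> measure lborel I0"
    and I0d: "\<forall>s\<in>I0. \<forall>t\<in>I0. \<bar>dist (\<phi> s) (\<phi> t) - dist (\<psi> s) (\<psi> t)\<bar> \<le> \<epsilon>"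
    unfolding boxset_def by blast
  define \<Phi> where "\<Phi> t = (\<phi> t, \<psi> t)" for t
  have m1: "\<phi> \<in> unitI \<rightarrow>\<^sub>M borel" and d1: "distr unitI borel \<phi> = mX" using p1 by (auto simp: parameter_def)
  have m2: "\<psi> \<in> unitI \<rightarrow>\<^sub>M borel" and d2: "distr unitI borel \<psi> = mY" using p2 by (auto simp: parameter_def)
  have \<Phi>m: "\<Phi> \<in> unitI \<rightarrow>\<^sub>M (borel :: ('a \<times> 'b) measure)"
    unfolding \<Phi>_def by (subst borel_prod[symmetric]) (rule measurable_Pair[OF m1 m2])
  define \<pi> where "\<pi> = distr unitI (borel :: ('a \<times> 'b) measure) \<Phi>"
  have P\<pi>: "prob_space \<pi>" unfolding \<pi>_def by (intro prob_space.prob_space_distr prob_space_unitI \<Phi>m)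
  have fstd: "distr \<pi> borel fst = mX"
  proof -
    have "fst \<circ> \<Phi> = \<phi>" by (simp add: \<Phi>_def o_def)
    then show ?thesis unfolding \<pi>_def using distr_distr[OF fst_meas \<Phi>m] d1 by simp
  qed
  have sndd: "distr \<pi> borel snd = mY"
  proof -
    have "snd \<circ> \<Phi> = \<psi>" by (simp add: \<Phi>_def o_def)
    then show ?thesis unfolding \<pi>_def using distr_distr[OF snd_meas \<Phi>m] d2 by simp
  qed
  have \<pi>T: "\<pi> \<in> transport_plans mX mY"
    unfolding transport_plans_def using P\<pi> fstd sndd by (simp add: \<pi>_def)
  have fm: "finite_measure unitI" using prob_space_unitI unfolding prob_space_def by blast
  have measS: "measure \<pi> S = measure unitI (\<Phi> -` S \<inter> {0..<1})" if "closed S" for S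
    unfolding \<pi>_def using measure_distr[OF \<Phi>m borel_closed[OF that]] by simp
  show ?thesis
  proof (cases "I0 = {}")
    case True
    then have "1 \<le> \<epsilon>" using I0(3) by simp
    have "1 - measure \<pi> {\<Phi> 0} \<le> ?V + \<delta>" using \<open>1 \<le> \<epsilon>\<close> \<epsilon>(2) measure_nonneg[of \<pi> "{\<Phi> 0}"] by linarith
    moreover have "dis {\<Phi> 0} \<le> ereal (?V + \<delta>)" using e0 \<epsilon>(2) by (simp add: dis_singleton)
    ultimately show ?thesis using \<pi>T by (intro exI[of _ \<pi>] exI[of _ "{\<Phi> 0}"]) auto
  next
    case False
    define S where "S = closure (\<Phi> ` I0)"
    have clS: "closed S" by (simp add: S_def)
    have Sne: "S \<noteq> {}" using False by (simp add: S_def)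
    have "measure lborel I0 = measure unitI I0" using I0(2) by (simp add: measure_def emeasure_unitI)
    also have "\<dots> \<le> measure unitI (\<Phi> -` S \<inter> {0..<1})"
    proof (rule finite_measure.finite_measure_mono[OF fm])
      show "I0 \<subseteq> \<Phi> -` S \<inter> {0..<1}" using I0(2) closure_subset[of "\<Phi> ` I0"] by (auto simp: S_def)
      show "\<Phi> -` S \<inter> {0..<1} \<in> sets unitI" using measurable_sets[OF \<Phi>m borel_closed[OF clS]] by simp
    qed
    also have "\<dots> = measure \<pi> S" using measS[OF clS] by simp
    finally have "1 - measure \<pi> S \<le> ?V + \<delta>" using I0(3) \<epsilon>(2) by linarith
    moreover have "dis S \<le> ereal \<epsilon>"
      unfolding S_def using False I0d by (intro dis_closure) (auto simp: \<Phi>_def)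
    then have "dis S \<le> ereal (?V + \<delta>)" using \<epsilon>(2) by (meson ereal_less_eq(3) less_imp_le order_trans)
    ultimately show ?thesis using \<pi>T clS Sne by blast
  qed
qed

lemma small_inv: "(e::real) > 0 \<Longrightarrow> \<exists>N. 1 / real (Suc N) < e"
  using reals_Archimedean[of e] by (auto simp: inverse_eq_divide)

lemma inv_Suc_mono: "n \<le> m \<Longrightarrow> 1 / real (Suc m) \<le> 1 / real (Suc n)"
  by (simp add: frac_le)

lemma attain:
  fixes mX :: "'a::polish_space measure" and mY :: "'b::polish_space measure"
  assumes mX: "mm_measure mX" and mY: "mm_measure mY"
  shows "\<exists>\<pi> S. \<pi> \<in> transport_plans mX mY \<and> closed S \<and> 1 - measure \<pi> S \<le> box_dist mX mY \<and>
      dis S \<le> ereal (box_dist mX mY)"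
proof -
  let ?V = "box_dist mX mY"
  have V0: "0 \<le> ?V" by (rule box_dist_nonneg[OF mX mY])
  have "\<forall>n. \<exists>pS. fst pS \<in> transport_plans mX mY \<and> closed (snd pS) \<and> snd pS \<noteq> {} \<and>
     1 - measure (fst pS) (snd pS) \<le> ?V + 1 / real (Suc n) \<and> dis (snd pS) \<le> ereal (?V + 1 / real (Suc n))"
  proof
    fix n
    have "(1::real) / real (Suc n) > 0" by simp
    from upper_approx[OF mX mY this] obtain \<pi> S where
      "\<pi> \<in> transport_plans mX mY \<and> closed S \<and> S \<noteq> {} \<and>
       1 - measure \<pi> S \<le> ?V + 1 / real (Suc n) \<and> dis S \<le> ereal (?V + 1 / real (Suc n))" by blast
    then show "\<exists>pS. fst pS \<in> transport_plans mX mY \<and> closed (snd pS) \<and> snd pS \<noteq> {} \<and>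
     1 - measure (fst pS) (snd pS) \<le> ?V + 1 / real (Suc n) \<and> dis (snd pS) \<le> ereal (?V + 1 / real (Suc n))"
      by (intro exI[of _ "(\<pi>, S)"]) simp
  qed
  from choice[OF this] obtain f where f: "\<And>n. fst (f n) \<in> transport_plans mX mY \<and> closed (snd (f n)) \<and> snd (f n) \<noteq> {} \<and>
     1 - measure (fst (f n)) (snd (f n)) \<le> ?V + 1 / real (Suc n) \<and> dis (snd (f n)) \<le> ereal (?V + 1 / real (Suc n))"
    by blast
  define \<pi> where "\<pi> n = fst (f n)" for n
  define S where "S n = snd (f n)" for n
  have \<pi>T: "\<pi> n \<in> transport_plans mX mY" for n using f by (simp add: \<pi>_def)
  have Sc: "closed (S n)" for n using f by (simp add: S_def)
  have Sm: "1 - measure (\<pi> n) (S n) \<le> ?V + 1 / real (Suc n)" for n using f by (simp add: \<pi>_def S_def)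
  have Sd: "dis (S n) \<le> ereal (?V + 1 / real (Suc n))" for n using f by (simp add: S_def)
  have Sne: "S n \<noteq> {}" for n using f by (simp add: S_def)
  have P: "prob_space (\<pi> n)" and Ss: "sets (\<pi> n) = sets borel"
    and m1: "distr (\<pi> n) borel fst = mX" and m2: "distr (\<pi> n) borel snd = mY" for n
    using \<pi>T[of n] by (auto simp: transport_plans_def)
  have sp: "space (\<pi> n) = UNIV" for n using sets_eq_imp_space_eq[OF Ss[of n]] by simp
  have fm: "finite_measure (\<pi> n)" for n using P[of n] unfolding prob_space_def by blast
  have PX: "prob_space mX" "sets mX = sets borel" using mX by (auto simp: mm_measure_def)
  have PY: "prob_space mY" "sets mY = sets borel" using mY by (auto simp: mm_measure_def)
  have fstm: "fst \<in> \<pi> n \<rightarrow>\<^sub>M borel" for n using fst_meas measurable_cong_sets[OF Ss[of n] refl] by blast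
  have sndm: "snd \<in> \<pi> n \<rightarrow>\<^sub>M borel" for n using snd_meas measurable_cong_sets[OF Ss[of n] refl] by blast
  have mfst: "measure (\<pi> n) (A \<times> UNIV) = measure mX A" if "A \<in> sets borel" for A n
  proof -
    have "measure mX A = measure (\<pi> n) (fst -` A \<inter> space (\<pi> n))"
      using measure_distr[OF fstm[of n] that] m1[of n] by simp
    also have "fst -` A \<inter> space (\<pi> n) = A \<times> UNIV" using sp by auto
    finally show ?thesis by simp
  qed
  have msnd: "measure (\<pi> n) (UNIV \<times> A) = measure mY A" if "A \<in> sets borel" for A n
  proof -
    have "measure mY A = measure (\<pi> n) (snd -` A \<inter> space (\<pi> n))"
      using measure_distr[OF sndm[of n] that] m2[of n] by simp
    also have "snd -` A \<inter> space (\<pi> n) = UNIV \<times> A" using sp by auto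
    finally show ?thesis by simp
  qed
  have tight: "\<exists>K. compact K \<and> (\<forall>n. measure (\<pi> n) (UNIV - K) \<le> e)" if e: "e > 0" for e
  proof -
    have e2: "e/2 > 0" using e by simp
    obtain K1 where K1: "compact K1" "measure mX (UNIV - K1) \<le> e/2" using tight1[OF PX(1) PX(2) e2] by blast
    obtain K2 where K2: "compact K2" "measure mY (UNIV - K2) \<le> e/2" using tight1[OF PY(1) PY(2) e2] by blast
    have B1: "UNIV - K1 \<in> sets borel" using borel_compact[OF K1(1)] by (metis sets.compl_sets space_borel)
    have B2: "UNIV - K2 \<in> sets borel" using borel_compact[OF K2(1)] by (metis sets.compl_sets space_borel)
    have PB1: "(UNIV - K1) \<times> (UNIV::'b set) \<in> sets (borel :: ('a \<times> 'b) measure)"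
      using measurable_sets[OF fst_meas B1] by (simp add: vimage_fst)
    have PB2: "(UNIV::'a set) \<times> (UNIV - K2) \<in> sets (borel :: ('a \<times> 'b) measure)"
      using measurable_sets[OF snd_meas B2] by (simp add: vimage_snd)
    show ?thesis
    proof (intro exI conjI allI)
      show "compact (K1 \<times> K2)" using K1(1) K2(1) by (rule compact_Times)
      fix n
      have "measure (\<pi> n) (UNIV - K1 \<times> K2) \<le> measure (\<pi> n) ((UNIV - K1) \<times> UNIV \<union> UNIV \<times> (UNIV - K2))"
        using Ss[of n] sp[of n] PB1 PB2 by (intro finite_measure.finite_measure_mono[OF fm]) auto
      also have "\<dots> \<le> measure (\<pi> n) ((UNIV - K1) \<times> UNIV) + measure (\<pi> n) (UNIV \<times> (UNIV - K2))"
        using Ss[of n] PB1 PB2 by (intro measure_Un_le) auto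
      also have "\<dots> \<le> e" using mfst[OF B1, of n] msnd[OF B2, of n] K1(2) K2(2) by simp
      finally show "measure (\<pi> n) (UNIV - K1 \<times> K2) \<le> e" .
    qed
  qed
  define feat :: "nat list + nat \<times> nat \<Rightarrow> nat \<Rightarrow> real" where
    "feat x n = (case x of Inl ks \<Rightarrow> measure (\<pi> n) (cell ks)
        | Inr im \<Rightarrow> (if S n \<inter> ball (dseq (fst im)) (1 / real (Suc (snd im))) \<noteq> {} then 1 else 0))" for x n
  have fb: "\<bar>feat (from_nat j) n\<bar> \<le> 1" for j n
  proof (cases "from_nat j :: nat list + nat \<times> nat")
    case (Inl ks)
    then show ?thesis using prob_space.prob_le_1[OF P[of n]] by (simp add: feat_def)
  qed (simp add: feat_def)
  obtain r where r: "strict_mono r" "\<And>j. convergent (\<lambda>k. feat (from_nat j) (r k))"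
    using diag_convergent[of "\<lambda>j n. feat (from_nat j) n", OF fb] by blast
  have rconv: "convergent (\<lambda>k. feat x (r k))" for x
    using r(2)[of "to_nat x"] by simp
  have rge: "n \<le> r n" for n using seq_suble[OF r(1)] .
  have "\<exists>\<nu>. prob_space \<nu> \<and> sets \<nu> = sets borel \<and>
     (\<forall>F c. closed F \<longrightarrow> (\<forall>e>0. \<exists>N. \<forall>n\<ge>N. c - e \<le> measure (\<pi> (r n)) F) \<longrightarrow> c \<le> measure \<nu> F)"
    proof (rule limit_measure)
    fix n show "prob_space (\<pi> (r n))" by (rule P)
  next
    fix n show "sets (\<pi> (r n)) = sets borel" by (rule Ss)
  next
    fix e :: real assume "e > 0"
    then obtain K where "compact K" "\<forall>n. measure (\<pi> n) (UNIV - K) \<le> e" using tight by blast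
    then show "\<exists>K. compact K \<and> (\<forall>n. measure (\<pi> (r n)) (UNIV - K) \<le> e)" by blast
  next
    fix ks show "convergent (\<lambda>n. measure (\<pi> (r n)) (cell ks))"
      using rconv[of "Inl ks"] by (simp add: feat_def)
  qed
  then obtain \<nu> where h: "prob_space \<nu> \<and> sets \<nu> = sets borel \<and>
     (\<forall>F c. closed F \<longrightarrow> (\<forall>e>0. \<exists>N. \<forall>n\<ge>N. c - e \<le> measure (\<pi> (r n)) F) \<longrightarrow> c \<le> measure \<nu> F)" ..
  have P\<nu>: "prob_space \<nu>" and S\<nu>: "sets \<nu> = sets borel" using h by simp_all
  have H: "\<forall>F c. closed F \<longrightarrow> (\<forall>e>0. \<exists>N. \<forall>n\<ge>N. c - e \<le> measure (\<pi> (r n)) F) \<longrightarrow> c \<le> measure \<nu> F"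
    using h by (rule conjunct2[THEN conjunct2])
  have lim\<nu>: "c \<le> measure \<nu> F" if "closed F" "\<forall>e>0. \<exists>N. \<forall>n\<ge>N. c - e \<le> measure (\<pi> (r n)) F" for F c
  proof -
    have HFc: "closed F \<longrightarrow> (\<forall>e>0. \<exists>N. \<forall>n\<ge>N. c - e \<le> measure (\<pi> (r n)) F) \<longrightarrow> c \<le> measure \<nu> F"
      using spec[OF spec[OF H, of F], of c] .
    show ?thesis using mp[OF mp[OF HFc that(1)] that(2)] .
  qed
  have sp\<nu>: "space \<nu> = UNIV" using sets_eq_imp_space_eq[OF S\<nu>] by simp
  have fm\<nu>: "finite_measure \<nu>" using P\<nu> unfolding prob_space_def by blast
  have fst\<nu>: "fst \<in> \<nu> \<rightarrow>\<^sub>M borel" using fst_meas measurable_cong_sets[OF S\<nu> refl] by blast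
  have snd\<nu>: "snd \<in> \<nu> \<rightarrow>\<^sub>M borel" using snd_meas measurable_cong_sets[OF S\<nu> refl] by blast
  have marg1: "distr \<nu> borel fst = mX"
  proof (rule measure_eq_closed_le[OF PX])
    show "prob_space (distr \<nu> borel fst)" by (intro prob_space.prob_space_distr P\<nu> fst\<nu>)
    show "sets (distr \<nu> borel fst) = sets borel" by simp
    fix F :: "'a set" assume F: "closed F"
    have FB: "F \<in> sets borel" using F by (rule borel_closed)
    have "measure mX F \<le> measure \<nu> (F \<times> UNIV)"
      using mfst[OF FB] F by (intro lim\<nu>) (auto intro: closed_Times)
    also have "measure \<nu> (F \<times> UNIV) = measure (distr \<nu> borel fst) F"
      using measure_distr[OF fst\<nu> FB] sp\<nu> by (simp add: vimage_fst)
    finally have "measure mX F \<le> measure (distr \<nu> borel fst) F" .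
    moreover have "finite_measure (distr \<nu> borel fst)" by (intro finite_measure.finite_measure_distr fm\<nu> fst\<nu>)
    moreover have "finite_measure mX" using PX unfolding prob_space_def by blast
    ultimately show "emeasure mX F \<le> emeasure (distr \<nu> borel fst) F"
      by (simp add: finite_measure.emeasure_eq_measure)
  qed
  have marg2: "distr \<nu> borel snd = mY"
  proof (rule measure_eq_closed_le[OF PY])
    show "prob_space (distr \<nu> borel snd)" by (intro prob_space.prob_space_distr P\<nu> snd\<nu>)
    show "sets (distr \<nu> borel snd) = sets borel" by simp
    fix F :: "'b set" assume F: "closed F"
    have FB: "F \<in> sets borel" using F by (rule borel_closed)
    have "measure mY F \<le> measure \<nu> (UNIV \<times> F)"
      using msnd[OF FB] F by (intro lim\<nu>) (auto intro: closed_Times)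
    also have "measure \<nu> (UNIV \<times> F) = measure (distr \<nu> borel snd) F"
      using measure_distr[OF snd\<nu> FB] sp\<nu> by (simp add: vimage_snd)
    finally have "measure mY F \<le> measure (distr \<nu> borel snd) F" .
    moreover have "finite_measure (distr \<nu> borel snd)" by (intro finite_measure.finite_measure_distr fm\<nu> snd\<nu>)
    moreover have "finite_measure mY" using PY unfolding prob_space_def by blast
    ultimately show "emeasure mY F \<le> emeasure (distr \<nu> borel snd) F"
      by (simp add: finite_measure.emeasure_eq_measure)
  qed
  have \<nu>T: "\<nu> \<in> transport_plans mX mY"
    unfolding transport_plans_def using P\<nu> S\<nu> marg1 marg2 by simp
  define FM where "FM M = closure (\<Union>j\<in>{M..}. S (r j))" for M
  define SS where "SS = (\<Inter>M. FM M)"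
  have clFM: "closed (FM M)" for M by (simp add: FM_def)
  have clSS: "closed SS" unfolding SS_def using clFM by blast
  have FMm: "1 - ?V \<le> measure \<nu> (FM M)" for M
  proof (rule lim\<nu>[OF clFM], intro allI impI)
    fix e :: real assume "e > 0"
    then obtain N0 where N0: "1 / real (Suc N0) < e" using small_inv by blast
    show "\<exists>N. \<forall>n\<ge>N. 1 - ?V - e \<le> measure (\<pi> (r n)) (FM M)"
    proof (intro exI[of _ "max M N0"] allI impI)
      fix n assume n: "max M N0 \<le> n"
      have "S (r n) \<subseteq> FM M"
        unfolding FM_def using n closure_subset[of "\<Union>j\<in>{M..}. S (r j)"] by auto
      then have "measure (\<pi> (r n)) (S (r n)) \<le> measure (\<pi> (r n)) (FM M)"
        using Ss sp clFM by (intro finite_measure.finite_measure_mono[OF fm]) (auto intro: borel_closed)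
      moreover have "1 / real (Suc (r n)) \<le> 1 / real (Suc N0)"
        using rge[of n] n by (intro inv_Suc_mono) simp
      ultimately show "1 - ?V - e \<le> measure (\<pi> (r n)) (FM M)" using Sm[of "r n"] N0 by linarith
    qed
  qed
  have decFM: "decseq FM"
    unfolding decseq_def FM_def by (intro allI impI closure_mono UN_mono) auto
  have "(\<lambda>M. measure \<nu> (FM M)) \<longlonglongrightarrow> measure \<nu> (\<Inter>M. FM M)"
    using clFM S\<nu> decFM by (intro finite_measure.finite_Lim_measure_decseq[OF fm\<nu>]) (auto intro: borel_closed)
  then have SSm: "1 - ?V \<le> measure \<nu> SS" unfolding SS_def using FMm by (intro LIMSEQ_le_const) auto
  have approx: "\<exists>N. \<forall>n\<ge>N. \<exists>x'\<in>S (r n). dist x' x < e" if x: "x \<in> SS" and e: "e > 0" for x e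
  proof -
    obtain m where m: "1 / real (Suc m) < e / 2" using small_inv[of "e/2"] e by auto
    have pm: "0 < 1 / real (Suc m)" by simp
    obtain i where i: "dist x (dseq i :: 'a \<times> 'b) < 1 / real (Suc m)" using dseq[OF pm] by blast
    define B :: "('a \<times> 'b) set" where "B = ball (dseq i) (1 / real (Suc m))"
    have xB: "x \<in> B" using i by (simp add: B_def dist_commute)
    define a where "a k = feat (Inr (i, m)) (r k)" for k
    have a: "a k = (if S (r k) \<inter> B \<noteq> {} then 1 else 0)" for k by (simp add: a_def feat_def B_def)
    have aeq: "a = (\<lambda>k. feat (Inr (i, m)) (r k))" by (rule ext) (simp add: a_def)
    obtain L where L: "a \<longlonglongrightarrow> L" using rconv[of "Inr (i, m)"] unfolding aeq convergent_def by blast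
    have freq: "\<exists>k\<ge>M. S (r k) \<inter> B \<noteq> {}" for M
    proof -
      have "x \<in> FM M" using x by (simp add: SS_def)
      then have "B \<inter> FM M \<noteq> {}" using xB by blast
      then have "B \<inter> (\<Union>j\<in>{M..}. S (r j)) \<noteq> {}"
        unfolding FM_def using open_Int_closure_eq_empty[of B] by (simp add: B_def)
      then show ?thesis by auto
    qed
    obtain N0 where N0: "\<forall>k\<ge>N0. dist (a k) L < 1/2" using L by (metis LIMSEQ_iff_nz half_gt_zero_iff zero_less_one)
    obtain k0 where k0: "k0 \<ge> N0" "S (r k0) \<inter> B \<noteq> {}" using freq by blast
    have L1: "\<bar>1 - L\<bar> < 1/2"
    proof -
      have "dist (a k0) L < 1/2" using N0 k0(1) by blast
      moreover have "a k0 = 1" using a[of k0] k0(2) by simp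
      ultimately show ?thesis by (simp add: dist_real_def)
    qed
    have hit: "S (r k) \<inter> B \<noteq> {}" if "k \<ge> N0" for k
    proof (rule ccontr)
      assume "\<not> S (r k) \<inter> B \<noteq> {}"
      then have "a k = 0" using a[of k] by simp
      moreover have "dist (a k) L < 1/2" using N0 that by blast
      ultimately have "\<bar>0 - L\<bar> < 1/2" by (simp add: dist_real_def)
      then show False using L1 by linarith
    qed
    show ?thesis
    proof (intro exI[of _ N0] allI impI)
      fix n assume "N0 \<le> n"
      then obtain x' where x': "x' \<in> S (r n)" "x' \<in> B" using hit by blast
      have "dist x' x \<le> dist x' (dseq i) + dist (dseq i) x" by (rule dist_triangle)
      also have "\<dots> < e" using x'(2) i m by (simp add: B_def dist_commute)
      finally show "\<exists>x'\<in>S (r n). dist x' x < e" using x'(1) by blast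
    qed
  qed
  show ?thesis
  proof (cases "SS = {}")
    case True
    then have "1 \<le> ?V" using SSm by simp
    moreover have "0 \<le> measure \<nu> {undefined}" by (rule measure_nonneg)
    ultimately have "1 - measure \<nu> {undefined} \<le> ?V" by linarith
    moreover have "dis {undefined} \<le> ereal ?V" using V0 by (simp add: dis_singleton)
    ultimately show ?thesis using \<nu>T by (intro exI[of _ \<nu>] exI[of _ "{undefined}"]) auto
  next
    case False
    have "\<bar>dist (fst x) (fst y) - dist (snd x) (snd y)\<bar> \<le> ?V" if x: "x \<in> SS" and y: "y \<in> SS" for x y
    proof (rule field_le_epsilon)
      fix e :: real assume e: "0 < e"
      define e' where "e' = e / 5"
      have e': "e' > 0" using e by (simp add: e'_def)
      obtain N1 where N1: "\<forall>n\<ge>N1. \<exists>x'\<in>S (r n). dist x' x < e'" using approx[OF x e'] by blast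
      obtain N2 where N2: "\<forall>n\<ge>N2. \<exists>x'\<in>S (r n). dist x' y < e'" using approx[OF y e'] by blast
      obtain N3 where N3: "1 / real (Suc N3) < e'" using small_inv[OF e'] by blast
      define n where "n = max N1 (max N2 N3)"
      have "N1 \<le> n" "N2 \<le> n" by (simp_all add: n_def)
      then obtain x' y' where x': "x' \<in> S (r n)" "dist x' x < e'" and y': "y' \<in> S (r n)" "dist y' y < e'"
        using N1 N2 by blast
      have "\<bar>dist (fst x') (fst y') - dist (snd x') (snd y')\<bar> \<le> ?V + 1 / real (Suc (r n))"
        using Sd[of "r n"] dis_le_iff[OF Sne[of "r n"]] x'(1) y'(1) by blast
      moreover have "1 / real (Suc (r n)) \<le> 1 / real (Suc N3)"
        using rge[of n] by (intro inv_Suc_mono) (simp add: n_def)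
      moreover have "\<bar>dist (fst x) (fst y) - dist (fst x') (fst y')\<bar> \<le> 2 * e'"
      proof -
        have "\<bar>dist (fst x) (fst y) - dist (fst x') (fst y')\<bar> \<le> dist (fst x) (fst x') + dist (fst y) (fst y')"
          by (rule abs_dist_diff_le)
        also have "\<dots> \<le> dist x x' + dist y y'" by (intro add_mono dist_fst_le)
        finally show ?thesis using x'(2) y'(2) by (simp add: dist_commute)
      qed
      moreover have "\<bar>dist (snd x) (snd y) - dist (snd x') (snd y')\<bar> \<le> 2 * e'"
      proof -
        have "\<bar>dist (snd x) (snd y) - dist (snd x') (snd y')\<bar> \<le> dist (snd x) (snd x') + dist (snd y) (snd y')"
          by (rule abs_dist_diff_le)
        also have "\<dots> \<le> dist x x' + dist y y'" by (intro add_mono dist_snd_le)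
        finally show ?thesis using x'(2) y'(2) by (simp add: dist_commute)
      qed
      ultimately have "\<bar>dist (fst x) (fst y) - dist (snd x) (snd y)\<bar> \<le> ?V + 1 / real (Suc (r n)) + 4 * e'"
        unfolding abs_le_iff by linarith
      moreover have "1 / real (Suc (r n)) \<le> 1 / real (Suc N3)"
        using rge[of n] by (intro inv_Suc_mono) (simp add: n_def)
      ultimately show "\<bar>dist (fst x) (fst y) - dist (snd x) (snd y)\<bar> \<le> ?V + e"
        using N3 unfolding e'_def by linarith
    qed
    then have "dis SS \<le> ereal ?V" using False by (subst dis_le_iff) auto
    then show ?thesis using \<nu>T clSS SSm by (intro exI[of _ \<nu>] exI[of _ SS]) auto
  qed
qed

theorem theorem1p1:
  fixes mX :: "'a::polish_space measure" and mY :: "'b::polish_space measure"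
  assumes "mm_measure mX" and "mm_measure mY"
  shows "\<exists>\<pi> S. \<pi> \<in> transport_plans mX mY \<and> closed S \<and>
           max (ereal (1 - measure \<pi> S)) (dis S) = ereal (box_dist mX mY) \<and>
           (\<forall>\<pi>' S'. \<pi>' \<in> transport_plans mX mY \<and> closed S' \<longrightarrow>
              max (ereal (1 - measure \<pi> S)) (dis S) \<le> max (ereal (1 - measure \<pi>' S')) (dis S'))"
proof -
  obtain \<pi> S where \<pi>: "\<pi> \<in> transport_plans mX mY" and S: "closed S"
    and a: "1 - measure \<pi> S \<le> box_dist mX mY" and b: "dis S \<le> ereal (box_dist mX mY)"
    using attain[OF assms] by blast
  have le: "max (ereal (1 - measure \<pi> S)) (dis S) \<le> ereal (box_dist mX mY)"
    using a b by simp
  have ge: "ereal (box_dist mX mY) \<le> max (ereal (1 - measure \<pi>' S')) (dis S')"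
    if "\<pi>' \<in> transport_plans mX mY" "closed S'" for \<pi>' S'
    using lower_bound[OF assms that] .
  have eq: "max (ereal (1 - measure \<pi> S)) (dis S) = ereal (box_dist mX mY)"
    by (rule antisym[OF le ge[OF \<pi> S]])
  have mn: "\<forall>\<pi>' S'. \<pi>' \<in> transport_plans mX mY \<and> closed S' \<longrightarrow>
              max (ereal (1 - measure \<pi> S)) (dis S) \<le> max (ereal (1 - measure \<pi>' S')) (dis S')"
    using le ge order_trans by blast
  show ?thesis using \<pi> S eq mn by blast
qed

end
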